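(* For the diamond network with orthogonal broadcast links, bit-pipe capacities $C_1,C_2$, and discrete memoryless MAC $p(y|x_1,x_2)$, the capacity satisfies $$C^\diamond\le \max_{p(x_1,x_2)}\ \min_{p(u|y)}\ \min\left\{\begin{array}{l} C_1+C_2,\\ C_1+I(X_2;Y|X_1),\\ C_2+I(X_1;Y|X_2),\\ I(X_1X_2;Y),\\ \tfrac12\big(C_1+C_2+I(X_1X_2;Y|U)+I(X_1;U|X_2)+I(X_2;U|X_1)\big)\end{array}\right\},$$ where the minimum is over auxiliary channels $p(u|y)$ (with $U$ in an arbitrary finite alphabet) and all quantities are evaluated for the joint pmf $p(x_1,x_2)p(y|x_1,x_2)p(u|y)$.
   Context: Diamond network with orthogonal broadcast component: a message $W$ uniformly distributed on $\{1,\dots,2^{nR}\}$ is encoded into $(V_1^n,V_2^n)$ with $H(V_1^n)\le nC_1$, $H(V_2^n)\le nC_2$; $V_i^n$ is delivered without error to relay $i$, which maps it to $X_i^n\in\mathcal X_i^n$. $(X_1^n,X_2^n)$ is sent over $n$ uses of a memoryless MAC $p(y|x_1,x_2)$ with finite alphabets, giving $Y^n$, from which a decoder forms $\hat W$. $R$ is achievable if $\Pr(\hat W\ne W)$ can be made arbitrarily small for some $n$; $C^\diamond$ is the supremum of achievable rates. Logarithms base 2. *)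

theory Defs
  imports Complex_Main "HOL-Library.FuncSet"
begin

text \<open>Entropy (base 2) of the random variable f under the pmf P on the finite
  sample set S. Convention: 0 log 0 = 0 (holds since log 2 0 = 0 in Isabelle).\<close>
definition ent :: "'d set \<Rightarrow> ('d \<Rightarrow> real) \<Rightarrow> ('d \<Rightarrow> 'e) \<Rightarrow> real" where
  "ent S P f = - (\<Sum>z\<in>f ` S. (\<Sum>d\<in>{d\<in>S. f d = z}. P d) * log 2 (\<Sum>d\<in>{d\<in>S. f d = z}. P d))"

definition cmi :: "'d set \<Rightarrow> ('d \<Rightarrow> real) \<Rightarrow> ('d \<Rightarrow> 'e) \<Rightarrow> ('d \<Rightarrow> 'f) \<Rightarrow> ('d \<Rightarrow> 'g) \<Rightarrow> real" where
  "cmi S P A B C = ent S P (\<lambda>d. (A d, C d)) + ent S P (\<lambda>d. (B d, C d))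
                   - ent S P (\<lambda>d. (A d, B d, C d)) - ent S P C"

definition mi :: "'d set \<Rightarrow> ('d \<Rightarrow> real) \<Rightarrow> ('d \<Rightarrow> 'e) \<Rightarrow> ('d \<Rightarrow> 'f) \<Rightarrow> real" where
  "mi S P A B = cmi S P A B (\<lambda>_. ())"

definition is_channel :: "('a::finite \<Rightarrow> 'b::finite \<Rightarrow> 'c::finite \<Rightarrow> real) \<Rightarrow> bool" where
  "is_channel W \<longleftrightarrow> (\<forall>x1 x2 y. 0 \<le> W x1 x2 y) \<and> (\<forall>x1 x2. (\<Sum>y\<in>UNIV. W x1 x2 y) = 1)"

text \<open>Number of messages: W is uniform on a set of size ceil(2^(nR)).\<close>
definition num_msgs :: "nat \<Rightarrow> real \<Rightarrow> nat" where
  "num_msgs n R = nat \<lceil>2 powr (real n * R)\<rceil>"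

text \<open>Average error probability of a code of block length n with M messages
  (messages 0..M-1): encoders f1, f2 produce V1^n, V2^n (coded as naturals),
  relays g1, g2 map them to X_i^n (sequences, index t < n), decoder dec maps y^n to a message.\<close>
definition err_prob ::
  "('a::finite \<Rightarrow> 'b::finite \<Rightarrow> 'c::finite \<Rightarrow> real) \<Rightarrow> nat \<Rightarrow> nat \<Rightarrow>
   (nat \<Rightarrow> nat) \<Rightarrow> (nat \<Rightarrow> nat) \<Rightarrow> (nat \<Rightarrow> nat \<Rightarrow> 'a) \<Rightarrow> (nat \<Rightarrow> nat \<Rightarrow> 'b) \<Rightarrow>
   ((nat \<Rightarrow> 'c) \<Rightarrow> nat) \<Rightarrow> real" where
  "err_prob W n M f1 f2 g1 g2 dec =
     (1 / real M) * (\<Sum>w<M. \<Sum>y\<in>{..<n} \<rightarrow>\<^sub>E (UNIV::'c set).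
        (\<Prod>t<n. W (g1 (f1 w) t) (g2 (f2 w) t) (y t)) * (if dec y \<noteq> w then 1 else 0))"

definition achievable ::
  "('a::finite \<Rightarrow> 'b::finite \<Rightarrow> 'c::finite \<Rightarrow> real) \<Rightarrow> real \<Rightarrow> real \<Rightarrow> real \<Rightarrow> bool" where
  "achievable W C1 C2 R \<longleftrightarrow>
     (\<forall>\<epsilon>>0. \<exists>n>0. \<exists>f1 f2 (g1::nat \<Rightarrow> nat \<Rightarrow> 'a) (g2::nat \<Rightarrow> nat \<Rightarrow> 'b) (dec::(nat \<Rightarrow> 'c) \<Rightarrow> nat).
        ent {..<num_msgs n R} (\<lambda>_. 1 / real (num_msgs n R)) f1 \<le> real n * C1 \<and>
        ent {..<num_msgs n R} (\<lambda>_. 1 / real (num_msgs n R)) f2 \<le> real n * C2 \<and>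
        err_prob W n (num_msgs n R) f1 f2 g1 g2 dec \<le> \<epsilon>)"

definition diamond_capacity ::
  "('a::finite \<Rightarrow> 'b::finite \<Rightarrow> 'c::finite \<Rightarrow> real) \<Rightarrow> real \<Rightarrow> real \<Rightarrow> real" where
  "diamond_capacity W C1 C2 = Sup {R. achievable W C1 C2 R}"

definition input_pmfs :: "('a::finite \<Rightarrow> 'b::finite \<Rightarrow> real) set" where
  "input_pmfs = {p. (\<forall>x1 x2. 0 \<le> p x1 x2) \<and> (\<Sum>x1\<in>UNIV. \<Sum>x2\<in>UNIV. p x1 x2) = 1}"

definition aux_channels :: "(nat \<times> ('c::finite \<Rightarrow> nat \<Rightarrow> real)) set" where
  "aux_channels = {(k, q). (\<forall>y u. 0 \<le> q y u) \<and> (\<forall>y. (\<Sum>u<k. q y u) = 1)}"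

definition bound_term ::
  "('a::finite \<Rightarrow> 'b::finite \<Rightarrow> 'c::finite \<Rightarrow> real) \<Rightarrow> real \<Rightarrow> real \<Rightarrow>
   ('a \<Rightarrow> 'b \<Rightarrow> real) \<Rightarrow> nat \<Rightarrow> ('c \<Rightarrow> nat \<Rightarrow> real) \<Rightarrow> real" where
  "bound_term W C1 C2 p k q =
    (let S = (UNIV::'a set) \<times> (UNIV::'b set) \<times> (UNIV::'c set) \<times> {..<k};
         P = (\<lambda>(x1, x2, y, u). p x1 x2 * W x1 x2 y * q y u);
         X1 = (\<lambda>(x1::'a, x2::'b, y::'c, u::nat). x1);
         X2 = (\<lambda>(x1::'a, x2::'b, y::'c, u::nat). x2);
         Y = (\<lambda>(x1::'a, x2::'b, y::'c, u::nat). y);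
         U = (\<lambda>(x1::'a, x2::'b, y::'c, u::nat). u)
     in min (C1 + C2)
        (min (C1 + cmi S P X2 Y X1)
        (min (C2 + cmi S P X1 Y X2)
        (min (mi S P (\<lambda>d. (X1 d, X2 d)) Y)
             ((C1 + C2 + cmi S P (\<lambda>d. (X1 d, X2 d)) Y U + cmi S P X1 U X2 + cmi S P X2 U X1) / 2)))))"

definition diamond_bound ::
  "('a::finite \<Rightarrow> 'b::finite \<Rightarrow> 'c::finite \<Rightarrow> real) \<Rightarrow> real \<Rightarrow> real \<Rightarrow> real" where
  "diamond_bound W C1 C2 =
     (SUP p\<in>input_pmfs. INF kq\<in>aux_channels. bound_term W C1 C2 p (fst kq) (snd kq))"

end

theory Submission
  imports Defs "HOL-Real_Asymp.Real_Asymp"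
begin

definition pf :: "'d set \<Rightarrow> ('d \<Rightarrow> real) \<Rightarrow> ('d \<Rightarrow> 'e) \<Rightarrow> 'e \<Rightarrow> real" where
  "pf S P f z = sum P {d\<in>S. f d = z}"

definition pmf_on :: "'d set \<Rightarrow> ('d \<Rightarrow> real) \<Rightarrow> bool" where
  "pmf_on S P \<longleftrightarrow> finite S \<and> (\<forall>d\<in>S. 0 \<le> P d) \<and> sum P S = 1"

lemma sum_group:
  assumes "finite S"
  shows "(\<Sum>d\<in>S. P d * \<phi> (k d)) = (\<Sum>z\<in>k ` S. pf S P k z * \<phi> z)"
proof -
  have "(\<Sum>d\<in>S. P d * \<phi> (k d)) = (\<Sum>z\<in>k ` S. \<Sum>d\<in>{d\<in>S. k d = z}. P d * \<phi> (k d))"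
    using sum.image_gen[OF assms] by blast
  also have "\<dots> = (\<Sum>z\<in>k ` S. pf S P k z * \<phi> z)"
    unfolding pf_def by (intro sum.cong refl) (simp add: sum_distrib_right)
  finally show ?thesis .
qed

lemma ent_alt:
  assumes "finite S"
  shows "ent S P f = - (\<Sum>d\<in>S. P d * log 2 (pf S P f (f d)))"
  unfolding ent_def using sum_group[OF assms, of P "\<lambda>z. log 2 (pf S P f z)" f]
  unfolding pf_def by simp

lemma pf_nonneg: "\<forall>d\<in>S. 0 \<le> P d \<Longrightarrow> 0 \<le> pf S P f z"
  unfolding pf_def by (intro sum_nonneg) auto

lemma pf_ge:
  assumes "finite S" "\<forall>d\<in>S. 0 \<le> P d" "d \<in> S"
  shows "P d \<le> pf S P f (f d)"
  unfolding pf_def using assms by (intro member_le_sum) auto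

lemma pf_pos:
  assumes "finite S" "\<forall>d\<in>S. 0 \<le> P d" "d \<in> S" "P d > 0"
  shows "pf S P f (f d) > 0"
  using pf_ge[OF assms(1-3), of f] assms(4) by linarith

lemma pf_le_sum:
  assumes "finite S" "\<forall>d\<in>S. 0 \<le> P d"
  shows "pf S P f z \<le> sum P S"
  unfolding pf_def using assms by (intro sum_mono2) auto

lemma ent_cong:
  assumes "finite S" "\<And>d d'. d \<in> S \<Longrightarrow> d' \<in> S \<Longrightarrow> f d = f d' \<longleftrightarrow> g d = g d'"
  shows "ent S P f = ent S P g"
proof -
  have "\<And>d. d \<in> S \<Longrightarrow> pf S P f (f d) = pf S P g (g d)"
    unfolding pf_def using assms(2) by (intro sum.cong) auto
  then show ?thesis unfolding ent_alt[OF assms(1)] by (simp cong: sum.cong)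
qed

lemma gibbs:
  assumes "finite S" "\<forall>d\<in>S. 0 \<le> P d" "\<forall>d\<in>S. P d > 0 \<longrightarrow> R d > 0"
    "(\<Sum>d\<in>S. P d * R d) \<le> sum P S"
  shows "(\<Sum>d\<in>S. P d * log 2 (R d)) \<le> 0"
proof -
  have "(\<Sum>d\<in>S. P d * log 2 (R d)) \<le> (\<Sum>d\<in>S. P d * (R d - 1) / ln 2)"
  proof (intro sum_mono)
    fix d assume d: "d \<in> S"
    show "P d * log 2 (R d) \<le> P d * (R d - 1) / ln 2"
    proof (cases "P d = 0")
      case True then show ?thesis by simp
    next
      case False
      then have "P d > 0" using assms(2) d by force
      then have R: "R d > 0" using assms(3) d by auto
      have "ln (R d) \<le> R d - 1" using ln_le_minus_one R by blast
      then have "log 2 (R d) \<le> (R d - 1) / ln 2"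
        unfolding log_def by (simp add: divide_right_mono)
      then have "P d * log 2 (R d) \<le> P d * ((R d - 1) / ln 2)"
        using \<open>P d > 0\<close> by (intro mult_left_mono) auto
      then show ?thesis by simp
    qed
  qed
  also have "\<dots> = ((\<Sum>d\<in>S. P d * R d) - sum P S) / ln 2"
    by (simp add: sum_divide_distrib[symmetric] sum_subtractf right_diff_distrib)
  also have "\<dots> \<le> 0" using assms(4) by (intro divide_nonpos_pos) auto
  finally show ?thesis .
qed

lemma pf_marg:
  assumes "finite S"
  shows "(\<Sum>a\<in>A ` S. pf S P (\<lambda>d. (A d, C d)) (a, c)) = pf S P C c"
proof -
  let ?T = "{d\<in>S. C d = c}"
  have "pf S P C c = (\<Sum>a\<in>A ` ?T. sum P {x\<in>?T. A x = a})"
    unfolding pf_def using sum.image_gen[of ?T P A] assms by simp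
  also have "\<dots> = (\<Sum>a\<in>A ` S. sum P {x\<in>?T. A x = a})"
  proof (intro sum.mono_neutral_left)
    show "\<forall>i\<in>A ` S - A ` ?T. sum P {x \<in> ?T. A x = i} = 0"
    proof
      fix i assume i: "i \<in> A ` S - A ` ?T"
      have "{x \<in> ?T. A x = i} = {}"
      proof (rule equals0I)
        fix x assume "x \<in> {x \<in> ?T. A x = i}"
        then have "i \<in> A ` ?T" by (metis (mono_tags, lifting) image_eqI mem_Collect_eq)
        with i show False by blast
      qed
      then show "sum P {x \<in> ?T. A x = i} = 0" by (metis sum.empty)
    qed
  qed (use assms in auto)
  also have "\<dots> = (\<Sum>a\<in>A ` S. pf S P (\<lambda>d. (A d, C d)) (a, c))"
    unfolding pf_def by (intro sum.cong refl arg_cong[where f="sum P"]) auto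
  finally show ?thesis by simp
qed

lemma pf_total:
  assumes "finite S"
  shows "(\<Sum>z\<in>f ` S. pf S P f z) = sum P S"
  using sum_group[OF assms, of P "\<lambda>_. 1" f] by simp

lemma cmi_as_sum:
  assumes "pmf_on S P"
  shows "cmi S P A B C = - (\<Sum>d\<in>S. P d * log 2
     (pf S P (\<lambda>d. (A d, C d)) (A d, C d) * pf S P (\<lambda>d. (B d, C d)) (B d, C d) /
      (pf S P (\<lambda>d. (A d, B d, C d)) (A d, B d, C d) * pf S P C (C d))))"
proof -
  have fin: "finite S" and nn: "\<forall>d\<in>S. 0 \<le> P d" using assms unfolding pmf_on_def by auto
  have "cmi S P A B C = (\<Sum>d\<in>S. P d * (- log 2 (pf S P (\<lambda>d. (A d, C d)) (A d, C d))
      - log 2 (pf S P (\<lambda>d. (B d, C d)) (B d, C d))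
      + log 2 (pf S P (\<lambda>d. (A d, B d, C d)) (A d, B d, C d)) + log 2 (pf S P C (C d))))"
    unfolding cmi_def ent_alt[OF fin]
    by (simp add: sum_negf sum.distrib[symmetric] sum_subtractf[symmetric] algebra_simps)
  also have "\<dots> = - (\<Sum>d\<in>S. P d * log 2
     (pf S P (\<lambda>d. (A d, C d)) (A d, C d) * pf S P (\<lambda>d. (B d, C d)) (B d, C d) /
      (pf S P (\<lambda>d. (A d, B d, C d)) (A d, B d, C d) * pf S P C (C d))))"
    unfolding sum_negf[symmetric]
  proof (intro sum.cong refl)
    fix d assume d: "d \<in> S"
    show "P d * (- log 2 (pf S P (\<lambda>d. (A d, C d)) (A d, C d))
      - log 2 (pf S P (\<lambda>d. (B d, C d)) (B d, C d))
      + log 2 (pf S P (\<lambda>d. (A d, B d, C d)) (A d, B d, C d)) + log 2 (pf S P C (C d))) =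
      - (P d * log 2 (pf S P (\<lambda>d. (A d, C d)) (A d, C d) * pf S P (\<lambda>d. (B d, C d)) (B d, C d) /
      (pf S P (\<lambda>d. (A d, B d, C d)) (A d, B d, C d) * pf S P C (C d))))"
    proof (cases "P d = 0")
      case True then show ?thesis by simp
    next
      case False
      then have Pd: "P d > 0" using nn d by force
      have p1: "pf S P (\<lambda>d. (A d, C d)) (A d, C d) > 0"
        using pf_pos[OF fin nn d Pd, of "\<lambda>d. (A d, C d)"] by simp
      have p2: "pf S P (\<lambda>d. (B d, C d)) (B d, C d) > 0"
        using pf_pos[OF fin nn d Pd, of "\<lambda>d. (B d, C d)"] by simp
      have p3: "pf S P (\<lambda>d. (A d, B d, C d)) (A d, B d, C d) > 0"
        using pf_pos[OF fin nn d Pd, of "\<lambda>d. (A d, B d, C d)"] by simp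
      have p4: "pf S P C (C d) > 0"
        using pf_pos[OF fin nn d Pd, of C] by simp
      show ?thesis using p1 p2 p3 p4
        by (simp add: log_mult log_divide algebra_simps)
    qed
  qed
  finally show ?thesis .
qed

lemma cmi_nonneg:
  assumes "pmf_on S P"
  shows "0 \<le> cmi S P A B C"
proof -
  have fin: "finite S" and nn: "\<forall>d\<in>S. 0 \<le> P d" and tot: "sum P S = 1"
    using assms unfolding pmf_on_def by auto
  define pAC where "pAC = pf S P (\<lambda>d. (A d, C d))"
  define pBC where "pBC = pf S P (\<lambda>d. (B d, C d))"
  define pABC where "pABC = pf S P (\<lambda>d. (A d, B d, C d))"
  define pC where "pC = pf S P C"
  define k where "k = (\<lambda>d. (A d, B d, C d))"
  define \<phi> where "\<phi> = (\<lambda>(a,b,c). pAC (a,c) * pBC (b,c) / (pABC (a,b,c) * pC c))"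
  define \<psi> where "\<psi> = (\<lambda>(a,b,c). pAC (a,c) * pBC (b,c) / pC c)"
  have Rphi: "\<And>d. pAC (A d, C d) * pBC (B d, C d) / (pABC (A d, B d, C d) * pC (C d)) = \<phi> (k d)"
    unfolding \<phi>_def k_def by simp
  have psinn: "\<And>z. 0 \<le> \<psi> z" unfolding \<psi>_def pAC_def pBC_def pC_def pf_def
    using nn by (auto intro!: divide_nonneg_nonneg mult_nonneg_nonneg sum_nonneg)
  have "(\<Sum>d\<in>S. P d * \<phi> (k d)) = (\<Sum>z\<in>k ` S. pABC z * \<phi> z)"
    unfolding pABC_def k_def by (rule sum_group[OF fin])
  also have "\<dots> \<le> (\<Sum>z\<in>k ` S. \<psi> z)"
  proof (intro sum_mono)
    fix z assume "z \<in> k ` S"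
    obtain a b c where z: "z = (a,b,c)" by (cases z) auto
    show "pABC z * \<phi> z \<le> \<psi> z"
    proof (cases "pABC z = 0")
      case True then show ?thesis using psinn by simp
    next
      case False then show ?thesis unfolding z \<phi>_def \<psi>_def by simp
    qed
  qed
  also have "\<dots> \<le> (\<Sum>z\<in>A ` S \<times> B ` S \<times> C ` S. \<psi> z)"
    using fin psinn by (intro sum_mono2) (auto simp: k_def)
  also have "\<dots> = (\<Sum>a\<in>A ` S. \<Sum>b\<in>B ` S. \<Sum>c\<in>C ` S. \<psi> (a,b,c))"
    by (simp add: sum.cartesian_product)
  also have "\<dots> = (\<Sum>c\<in>C ` S. (\<Sum>a\<in>A ` S. pAC (a,c)) * (\<Sum>b\<in>B ` S. pBC (b,c)) / pC c)"
    unfolding \<psi>_def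
    by (simp add: sum_distrib_left sum_distrib_right sum_divide_distrib sum.swap[of _ "C ` S"]
        sum.swap[of _ "B ` S" "A ` S"])
  also have "\<dots> = (\<Sum>c\<in>C ` S. pC c * pC c / pC c)"
    unfolding pAC_def pBC_def pC_def by (simp add: pf_marg[OF fin])
  also have "\<dots> \<le> (\<Sum>c\<in>C ` S. pC c)"
    by (intro sum_mono) (auto simp: pC_def pf_def intro!: sum_nonneg nn[rule_format])
  also have "\<dots> = sum P S" unfolding pC_def using pf_total[OF fin] by blast
  finally have le: "(\<Sum>d\<in>S. P d * \<phi> (k d)) \<le> sum P S" .
  have pos: "\<forall>d\<in>S. P d > 0 \<longrightarrow> \<phi> (k d) > 0"
  proof (intro ballI impI)
    fix d assume d: "d \<in> S" and Pd: "P d > 0"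
    show "\<phi> (k d) > 0" unfolding Rphi[symmetric] pAC_def pBC_def pABC_def pC_def
      using pf_pos[OF fin nn d Pd, of "\<lambda>d. (A d, C d)"] pf_pos[OF fin nn d Pd, of "\<lambda>d. (B d, C d)"]
        pf_pos[OF fin nn d Pd, of "\<lambda>d. (A d, B d, C d)"] pf_pos[OF fin nn d Pd, of C]
      by (auto intro!: divide_pos_pos mult_pos_pos)
  qed
  have "(\<Sum>d\<in>S. P d * log 2 (\<phi> (k d))) \<le> 0"
    by (rule gibbs[OF fin nn pos le])
  then show ?thesis unfolding cmi_as_sum[OF assms] Rphi[unfolded pAC_def pBC_def pABC_def pC_def] by simp
qed

definition ce :: "'d set \<Rightarrow> ('d \<Rightarrow> real) \<Rightarrow> ('d \<Rightarrow> 'e) \<Rightarrow> ('d \<Rightarrow> 'f) \<Rightarrow> real" where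
  "ce S P A C = ent S P (\<lambda>d. (A d, C d)) - ent S P C"

lemma ce_nonneg:
  assumes "pmf_on S P"
  shows "0 \<le> ce S P A C"
proof -
  have fin: "finite S" using assms unfolding pmf_on_def by auto
  have "ent S P (\<lambda>d. (A d, A d, C d)) = ent S P (\<lambda>d. (A d, C d))"
    by (rule ent_cong[OF fin]) auto
  then show ?thesis using cmi_nonneg[OF assms, of A A C] unfolding cmi_def ce_def by simp
qed

lemma ce_cond:
  assumes "pmf_on S P"
  shows "ce S P A (\<lambda>d. (B d, C d)) \<le> ce S P A C"
  using cmi_nonneg[OF assms, of A B C] unfolding cmi_def ce_def by simp

lemma ce_cong:
  assumes "finite S"
    "\<And>d d'. d \<in> S \<Longrightarrow> d' \<in> S \<Longrightarrow> A d = A d' \<longleftrightarrow> A' d = A' d'"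
    "\<And>d d'. d \<in> S \<Longrightarrow> d' \<in> S \<Longrightarrow> C d = C d' \<longleftrightarrow> C' d = C' d'"
  shows "ce S P A C = ce S P A' C'"
proof -
  have "ent S P (\<lambda>d. (A d, C d)) = ent S P (\<lambda>d. (A' d, C' d))"
  proof (rule ent_cong[OF assms(1)])
    fix d d' assume d: "d \<in> S" "d' \<in> S"
    have a: "A d = A d' \<longleftrightarrow> A' d = A' d'" using assms(2)[OF d] .
    have c: "C d = C d' \<longleftrightarrow> C' d = C' d'" using assms(3)[OF d] .
    show "(A d, C d) = (A d', C d') \<longleftrightarrow> (A' d, C' d) = (A' d', C' d')"
      unfolding prod.inject using a c by (rule arg_cong2[where f="(\<and>)"])
  qed
  moreover have "ent S P C = ent S P C'"
    by (rule ent_cong[OF assms(1)]) (rule assms(3))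
  ultimately show ?thesis unfolding ce_def by simp
qed

lemma ce_coarse:
  assumes "pmf_on S P" "\<And>d d'. d \<in> S \<Longrightarrow> d' \<in> S \<Longrightarrow> F d = F d' \<Longrightarrow> G d = G d'"
  shows "ce S P A F \<le> ce S P A G"
proof -
  have fin: "finite S" using assms unfolding pmf_on_def by auto
  have "ce S P A F = ce S P A (\<lambda>d. (F d, G d))"
  proof (rule ce_cong[OF fin])
    fix d d' assume d: "d \<in> S" "d' \<in> S"
    show "F d = F d' \<longleftrightarrow> (F d, G d) = (F d', G d')"
    proof
      assume "F d = F d'" then show "(F d, G d) = (F d', G d')" using assms(2)[OF d] by simp
    qed simp
  qed simp
  also have "\<dots> \<le> ce S P A G" by (rule ce_cond[OF assms(1)])
  finally show ?thesis .
qed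

lemma ce_chain:
  assumes "finite S"
  shows "ce S P (\<lambda>d. (X d, Y d)) G = ce S P X G + ce S P Y (\<lambda>d. (X d, G d))"
proof -
  have "ent S P (\<lambda>d. ((X d, Y d), G d)) = ent S P (\<lambda>d. (Y d, X d, G d))"
    by (rule ent_cong[OF assms]) (simp only: prod.inject, blast)
  then show ?thesis unfolding ce_def by simp
qed

lemma ent_const:
  assumes "finite S" "sum P S = 1"
  shows "ent S P (\<lambda>_. c) = 0"
proof -
  have "S \<noteq> {}" using assms by auto
  then have "(\<lambda>_. c) ` S = {c}" by auto
  moreover have "{d\<in>S. c = c} = S" by auto
  ultimately show ?thesis unfolding ent_def using assms(2) by simp
qed

lemma ce_const:
  assumes "finite S"
  shows "ce S P (\<lambda>_. c) G = 0"
proof -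
  have "ent S P (\<lambda>d. (c, G d)) = ent S P G" by (rule ent_cong[OF assms]) auto
  then show ?thesis unfolding ce_def by simp
qed

lemma subadd:
  fixes n :: nat and f :: "nat \<Rightarrow> 'd \<Rightarrow> 'e" and g :: "nat \<Rightarrow> 'd \<Rightarrow> 'f"
  assumes "pmf_on S P"
    "\<And>t d d'. t < n \<Longrightarrow> d \<in> S \<Longrightarrow> d' \<in> S \<Longrightarrow> G d = G d' \<Longrightarrow> g t d = g t d'"
  shows "ce S P (\<lambda>d. \<lambda>t\<in>{..<n}. f t d) G \<le> (\<Sum>t<n. ce S P (f t) (g t))"
  using assms(2)
proof (induction n)
  case 0
  have fin: "finite S" using assms unfolding pmf_on_def by auto
  show ?case using ce_const[OF fin, of P "\<lambda>t::nat. undefined :: 'e" G] by simp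
next
  case (Suc n)
  have fin: "finite S" using assms unfolding pmf_on_def by auto
  have "ce S P (\<lambda>d. \<lambda>t\<in>{..<Suc n}. f t d) G = ce S P (\<lambda>d. ((\<lambda>t\<in>{..<n}. f t d), f n d)) G"
  proof (rule ce_cong[OF fin])
    fix d d' assume "d \<in> S" "d' \<in> S"
    show "((\<lambda>t\<in>{..<Suc n}. f t d) = (\<lambda>t\<in>{..<Suc n}. f t d')) \<longleftrightarrow>
          ((\<lambda>t\<in>{..<n}. f t d), f n d) = ((\<lambda>t\<in>{..<n}. f t d'), f n d')"
    proof
      assume h: "(\<lambda>t\<in>{..<Suc n}. f t d) = (\<lambda>t\<in>{..<Suc n}. f t d')"
      have "\<And>t. t < Suc n \<Longrightarrow> f t d = f t d'"
      proof -
        fix t assume "t < Suc n"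
        then show "f t d = f t d'" using fun_cong[OF h, of t] by simp
      qed
      then show "((\<lambda>t\<in>{..<n}. f t d), f n d) = ((\<lambda>t\<in>{..<n}. f t d'), f n d')"
        by (auto simp: fun_eq_iff)
    next
      assume h: "((\<lambda>t\<in>{..<n}. f t d), f n d) = ((\<lambda>t\<in>{..<n}. f t d'), f n d')"
      have "\<And>t. t < n \<Longrightarrow> f t d = f t d'"
      proof -
        fix t assume "t < n"
        then show "f t d = f t d'" using fun_cong[OF conjunct1[OF h[unfolded prod.inject]], of t] by simp
      qed
      then show "(\<lambda>t\<in>{..<Suc n}. f t d) = (\<lambda>t\<in>{..<Suc n}. f t d')"
        using h by (auto simp: fun_eq_iff less_Suc_eq)
    qed
  qed simp
  also have "\<dots> = ce S P (\<lambda>d. \<lambda>t\<in>{..<n}. f t d) G + ce S P (f n) (\<lambda>d. ((\<lambda>t\<in>{..<n}. f t d), G d))"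
    by (rule ce_chain[OF fin])
  also have "\<dots> \<le> (\<Sum>t<n. ce S P (f t) (g t)) + ce S P (f n) (g n)"
  proof (rule add_mono)
    show "ce S P (\<lambda>d. \<lambda>t\<in>{..<n}. f t d) G \<le> (\<Sum>t<n. ce S P (f t) (g t))"
      by (rule Suc.IH) (rule Suc.prems, simp_all)
    have "ce S P (f n) (\<lambda>d. ((\<lambda>t\<in>{..<n}. f t d), G d)) \<le> ce S P (f n) G"
      by (rule ce_cond[OF assms(1)])
    also have "\<dots> \<le> ce S P (f n) (g n)"
      by (rule ce_coarse[OF assms(1)]) (rule Suc.prems, simp_all)
    finally show "ce S P (f n) (\<lambda>d. ((\<lambda>t\<in>{..<n}. f t d), G d)) \<le> ce S P (f n) (g n)" .
  qed
  also have "\<dots> = (\<Sum>t<Suc n. ce S P (f t) (g t))" by simp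
  finally show ?case .
qed

lemma ent_pf: "ent S P f = - (\<Sum>z\<in>f ` S. pf S P f z * log 2 (pf S P f z))"
  unfolding ent_def pf_def by simp

lemma pf_push:
  assumes "finite S" "finite S'" "\<pi> ` S \<subseteq> S'"
  shows "pf S P (\<lambda>d. \<psi> (\<pi> d)) z = (\<Sum>s\<in>{s\<in>S'. \<psi> s = z}. pf S P \<pi> s)"
proof -
  have "(\<Sum>s\<in>{s\<in>S'. \<psi> s = z}. sum P {x. x \<in> {d\<in>S. \<psi> (\<pi> d) = z} \<and> \<pi> x = s}) = sum P {d\<in>S. \<psi> (\<pi> d) = z}"
    by (rule sum.group) (use assms in auto)
  moreover have "\<And>s. s \<in> {s\<in>S'. \<psi> s = z} \<Longrightarrow> {x. x \<in> {d\<in>S. \<psi> (\<pi> d) = z} \<and> \<pi> x = s} = {d\<in>S. \<pi> d = s}"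
    by auto
  ultimately show ?thesis unfolding pf_def by simp
qed

lemma ent_push:
  assumes "finite S" "finite S'" "\<pi> ` S \<subseteq> S'" "\<And>s. s \<in> S' \<Longrightarrow> pf S P \<pi> s = P' s"
  shows "ent S P (\<lambda>d. \<psi> (\<pi> d)) = ent S' P' \<psi>"
proof -
  have pfeq: "pf S P (\<lambda>d. \<psi> (\<pi> d)) z = pf S' P' \<psi> z" for z
    unfolding pf_push[OF assms(1-3)] pf_def[of S' P' \<psi> z] using assms(4) by (intro sum.cong) auto
  have sub: "(\<lambda>d. \<psi> (\<pi> d)) ` S \<subseteq> \<psi> ` S'" using assms(3) by auto
  have "(\<Sum>z\<in>(\<lambda>d. \<psi> (\<pi> d)) ` S. pf S P (\<lambda>d. \<psi> (\<pi> d)) z * log 2 (pf S P (\<lambda>d. \<psi> (\<pi> d)) z))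
     = (\<Sum>z\<in>\<psi> ` S'. pf S P (\<lambda>d. \<psi> (\<pi> d)) z * log 2 (pf S P (\<lambda>d. \<psi> (\<pi> d)) z))"
  proof (rule sum.mono_neutral_left)
    show "\<forall>z\<in>\<psi> ` S' - (\<lambda>d. \<psi> (\<pi> d)) ` S. pf S P (\<lambda>d. \<psi> (\<pi> d)) z * log 2 (pf S P (\<lambda>d. \<psi> (\<pi> d)) z) = 0"
    proof
      fix z assume z: "z \<in> \<psi> ` S' - (\<lambda>d. \<psi> (\<pi> d)) ` S"
      have "{d\<in>S. \<psi> (\<pi> d) = z} = {}" using z by blast
      then have "pf S P (\<lambda>d. \<psi> (\<pi> d)) z = 0" unfolding pf_def by (metis sum.empty)
      then show "pf S P (\<lambda>d. \<psi> (\<pi> d)) z * log 2 (pf S P (\<lambda>d. \<psi> (\<pi> d)) z) = 0" by simp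
    qed
  qed (use assms sub in auto)
  then show ?thesis unfolding ent_pf pfeq by simp
qed

lemma E_push:
  assumes "finite S" "finite S'" "\<pi> ` S \<subseteq> S'"
  shows "(\<Sum>d\<in>S. P d * \<phi> (\<pi> d)) = (\<Sum>s\<in>S'. pf S P \<pi> s * \<phi> s)"
proof -
  have "(\<Sum>d\<in>S. P d * \<phi> (\<pi> d)) = (\<Sum>s\<in>\<pi> ` S. pf S P \<pi> s * \<phi> s)" by (rule sum_group[OF assms(1)])
  also have "\<dots> = (\<Sum>s\<in>S'. pf S P \<pi> s * \<phi> s)"
  proof (rule sum.mono_neutral_left)
    show "\<forall>s\<in>S' - \<pi> ` S. pf S P \<pi> s * \<phi> s = 0"
    proof
      fix s assume s: "s \<in> S' - \<pi> ` S"
      have "{d\<in>S. \<pi> d = s} = {}" using s by blast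
      then have "pf S P \<pi> s = 0" unfolding pf_def by (metis sum.empty)
      then show "pf S P \<pi> s * \<phi> s = 0" by simp
    qed
  qed (use assms in auto)
  finally show ?thesis .
qed

lemma ce_kernel:
  assumes "finite S" "\<forall>d\<in>S. 0 \<le> P d"
    "\<And>d. d \<in> S \<Longrightarrow> P d > 0 \<Longrightarrow> K d > 0 \<and> pf S P (\<lambda>d. (G d, F d)) (G d, F d) = pf S P F (F d) * K d"
  shows "ce S P G F = - (\<Sum>d\<in>S. P d * log 2 (K d))"
proof -
  have "ce S P G F = - (\<Sum>d\<in>S. P d * (log 2 (pf S P (\<lambda>d. (G d, F d)) (G d, F d)) - log 2 (pf S P F (F d))))"
    unfolding ce_def ent_alt[OF assms(1)] by (simp add: sum_subtractf right_diff_distrib)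
  also have "\<dots> = - (\<Sum>d\<in>S. P d * log 2 (K d))"
  proof (intro arg_cong[where f=uminus] sum.cong refl)
    fix d assume d: "d \<in> S"
    show "P d * (log 2 (pf S P (\<lambda>d. (G d, F d)) (G d, F d)) - log 2 (pf S P F (F d))) = P d * log 2 (K d)"
    proof (cases "P d = 0")
      case False
      then have Pd: "P d > 0" using assms(2) d by force
      have pF: "pf S P F (F d) > 0" by (rule pf_pos[OF assms(1,2) d Pd])
      from assms(3)[OF d Pd] have K: "K d > 0" and eq: "pf S P (\<lambda>d. (G d, F d)) (G d, F d) = pf S P F (F d) * K d" by auto
      show ?thesis unfolding eq using pF K by (simp add: log_mult)
    qed simp
  qed
  finally show ?thesis .
qed

lemma sum_times_single:
  assumes "finite A" "t \<in> T"
  shows "sum (\<lambda>(s, t). g s) ({s\<in>A. Q s} \<times> {t}) = sum g {s\<in>A. Q s}"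
  by (subst sum.cartesian_product[symmetric]) simp

lemma ent_ts:
  fixes n :: nat
  assumes "pmf_on S P" "n > 0"
  shows "ent (S \<times> {..<n}) (\<lambda>(s,t). P s / n) (\<lambda>(s,t). (f t s, t)) = log 2 n + (\<Sum>t<n. ent S P (f t)) / n"
proof -
  have fin: "finite S" and nn: "\<forall>d\<in>S. 0 \<le> P d" and tot: "sum P S = 1" using assms unfolding pmf_on_def by auto
  let ?S = "S \<times> {..<n}" and ?P = "\<lambda>(s,t). P s / real n" and ?f = "\<lambda>(s,t). (f t s, t)"
  have finS: "finite ?S" using fin by auto
  have pfeq: "pf ?S ?P ?f (f t s, t) = pf S P (f t) (f t s) / n" if "t < n" for s t
  proof -
    have "{d\<in>?S. ?f d = (f t s, t)} = {s'\<in>S. f t s' = f t s} \<times> {t}" using that by auto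
    then have "pf ?S ?P ?f (f t s, t) = sum ?P ({s'\<in>S. f t s' = f t s} \<times> {t})" unfolding pf_def by simp
    also have "\<dots> = (\<Sum>s'\<in>{s'\<in>S. f t s' = f t s}. P s' / n)" by (subst sum.cartesian_product[symmetric]) simp
    also have "\<dots> = pf S P (f t) (f t s) / n" unfolding pf_def by (simp add: sum_divide_distrib)
    finally show ?thesis .
  qed
  have "ent ?S ?P ?f = - (\<Sum>d\<in>?S. ?P d * log 2 (pf ?S ?P ?f (?f d)))" by (rule ent_alt[OF finS])
  also have "\<dots> = - (\<Sum>(s,t)\<in>?S. P s / n * log 2 (pf S P (f t) (f t s) / n))"
    by (intro arg_cong[where f=uminus] sum.cong refl) (clarsimp simp: pfeq)
  also have "\<dots> = - (\<Sum>s\<in>S. \<Sum>t<n. P s / n * log 2 (pf S P (f t) (f t s) / n))"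
    by (simp add: sum.cartesian_product)
  also have "\<dots> = - (\<Sum>s\<in>S. \<Sum>t<n. (P s * log 2 (pf S P (f t) (f t s)) - P s * log 2 n) / n)"
  proof (intro arg_cong[where f=uminus] sum.cong refl)
    fix s t assume s: "s \<in> S" and t: "t \<in> {..<n}"
    show "P s / n * log 2 (pf S P (f t) (f t s) / n) = (P s * log 2 (pf S P (f t) (f t s)) - P s * log 2 n) / n"
    proof (cases "P s = 0")
      case False
      then have Ps: "P s > 0" using nn s by force
      have "pf S P (f t) (f t s) > 0" by (rule pf_pos[OF fin nn s Ps])
      then show ?thesis using assms(2) by (simp add: log_divide diff_divide_distrib right_diff_distrib)
    qed simp
  qed
  also have "\<dots> = (\<Sum>t<n. - (\<Sum>s\<in>S. P s * log 2 (pf S P (f t) (f t s)))) / n + log 2 n * sum P S"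
  proof -
    have e1: "(\<Sum>s\<in>S. \<Sum>t<n. (P s * log 2 (pf S P (f t) (f t s)) - P s * log 2 n) / n)
      = (\<Sum>s\<in>S. \<Sum>t<n. P s * log 2 (pf S P (f t) (f t s))) / n - (\<Sum>s\<in>S. \<Sum>t<n. P s * log 2 n) / n"
      by (simp add: sum_subtractf diff_divide_distrib sum_divide_distrib)
    have e2: "(\<Sum>s\<in>S. \<Sum>t<n. P s * log 2 n) / n = log 2 n * sum P S"
      using assms(2) by (simp add: sum_distrib_right[symmetric] sum_distrib_left[symmetric])
    have e3: "(\<Sum>s\<in>S. \<Sum>t<n. P s * log 2 (pf S P (f t) (f t s))) = (\<Sum>t<n. \<Sum>s\<in>S. P s * log 2 (pf S P (f t) (f t s)))"
      by (rule sum.swap)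
    show ?thesis unfolding e1 e2 e3 by (simp add: sum_negf)
  qed
  also have "\<dots> = log 2 n + (\<Sum>t<n. ent S P (f t)) / n"
    using tot by (simp add: ent_alt[OF fin])
  finally show ?thesis .
qed

lemma ce_ts:
  fixes n :: nat
  assumes "pmf_on S P" "n > 0"
  shows "ce (S \<times> {..<n}) (\<lambda>(s,t). P s / n) (\<lambda>(s,t). a t s) (\<lambda>(s,t). (b t s, t))
       = (\<Sum>t<n. ce S P (a t) (b t)) / n"
proof -
  have fin: "finite S" using assms unfolding pmf_on_def by auto
  have "ent (S \<times> {..<n}) (\<lambda>(s,t). P s / n) (\<lambda>d. ((\<lambda>(s,t). a t s) d, (\<lambda>(s,t). (b t s, t)) d))
     = ent (S \<times> {..<n}) (\<lambda>(s,t). P s / n) (\<lambda>(s,t). ((a t s, b t s), t))"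
    by (rule ent_cong) (use fin in auto)
  then show ?thesis
    unfolding ce_def ent_ts[OF assms, of "\<lambda>t s. (a t s, b t s)"] ent_ts[OF assms, of b]
    by (simp add: sum_subtractf diff_divide_distrib)
qed

lemma sum_prod_kernel:
  fixes p :: "'a \<Rightarrow> real"
  assumes "finite A'" "finite B'" "\<And>a. a \<in> A' \<Longrightarrow> V a = c"
  shows "sum (\<lambda>(a,b). p a * K (V a) b) (A' \<times> B') = (\<Sum>a\<in>A'. p a) * (\<Sum>b\<in>B'. K c b)"
proof -
  have "sum (\<lambda>(a,b). p a * K (V a) b) (A' \<times> B') = (\<Sum>a\<in>A'. \<Sum>b\<in>B'. p a * K (V a) b)"
    by (simp add: sum.cartesian_product)
  also have "\<dots> = (\<Sum>a\<in>A'. \<Sum>b\<in>B'. p a * K c b)" using assms(3) by simp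
  also have "\<dots> = (\<Sum>a\<in>A'. p a) * (\<Sum>b\<in>B'. K c b)"
    by (rule sum_product[symmetric])
  finally show ?thesis .
qed

lemma markov:
  assumes "pmf_on (A \<times> B) (\<lambda>(a,b). p a * K (V a) b)" "\<forall>a\<in>A. 0 \<le> p a" "\<forall>x b. 0 \<le> K x b"
  shows "cmi (A \<times> B) (\<lambda>(a,b). p a * K (V a) b) fst (\<lambda>\<omega>. \<phi> (snd \<omega>)) (\<lambda>\<omega>. V (fst \<omega>)) = 0"
proof -
  let ?P = "\<lambda>(a,b). p a * K (V a) b"
  have finAB: "finite (A \<times> B)" using assms(1) unfolding pmf_on_def by auto
  have finA: "finite A" and finB: "finite B"
  proof -
    show "finite A"
    proof (cases "B = {}")
      case True then have e: "A \<times> B = {}" by simp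
      have "sum (\<lambda>(a,b). p a * K (V a) b) (A \<times> B) = 1" using assms(1) unfolding pmf_on_def by blast
      then show ?thesis unfolding e by simp
    next
      case False then show ?thesis using finAB finite_cartesian_productD1 by blast
    qed
    show "finite B"
    proof (cases "A = {}")
      case True then have e: "A \<times> B = {}" by simp
      have "sum (\<lambda>(a,b). p a * K (V a) b) (A \<times> B) = 1" using assms(1) unfolding pmf_on_def by blast
      then show ?thesis unfolding e by simp
    next
      case False then show ?thesis using finAB finite_cartesian_productD2 by blast
    qed
  qed
  show ?thesis
    unfolding cmi_as_sum[OF assms(1)]
  proof -
    have "\<And>d. d \<in> A \<times> B \<Longrightarrow> ?P d * log 2
     (pf (A \<times> B) ?P (\<lambda>d. (fst d, V (fst d))) (fst d, V (fst d)) *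
      pf (A \<times> B) ?P (\<lambda>d. (\<phi> (snd d), V (fst d))) (\<phi> (snd d), V (fst d)) /
      (pf (A \<times> B) ?P (\<lambda>d. (fst d, \<phi> (snd d), V (fst d))) (fst d, \<phi> (snd d), V (fst d)) *
       pf (A \<times> B) ?P (\<lambda>\<omega>. V (fst \<omega>)) (V (fst d)))) = 0"
    proof -
      fix d assume d: "d \<in> A \<times> B"
      obtain a b where ab: "d = (a,b)" by (cases d)
      have a: "a \<in> A" and b: "b \<in> B" using d ab by auto
      define \<kappa> where "\<kappa> = (\<Sum>b'\<in>{b'\<in>B. \<phi> b' = \<phi> b}. K (V a) b')"
      define Kt where "Kt = (\<Sum>b'\<in>B. K (V a) b')"
      define \<rho> where "\<rho> = (\<Sum>a'\<in>{a'\<in>A. V a' = V a}. p a')"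
      have s1: "{d\<in>A \<times> B. (fst d, V (fst d)) = (a, V a)} = {a} \<times> B" using a by auto
      have s2: "{d\<in>A \<times> B. (\<phi> (snd d), V (fst d)) = (\<phi> b, V a)} = {a'\<in>A. V a' = V a} \<times> {b'\<in>B. \<phi> b' = \<phi> b}" by auto
      have s3: "{d\<in>A \<times> B. (fst d, \<phi> (snd d), V (fst d)) = (a, \<phi> b, V a)} = {a} \<times> {b'\<in>B. \<phi> b' = \<phi> b}" using a by auto
      have s4: "{d\<in>A \<times> B. V (fst d) = V a} = {a'\<in>A. V a' = V a} \<times> B" by auto
      have pAC: "pf (A \<times> B) ?P (\<lambda>d. (fst d, V (fst d))) (a, V a) = p a * Kt"
        unfolding pf_def s1 Kt_def by (subst sum_prod_kernel[where c="V a"]) (use finB in auto)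
      have pBC: "pf (A \<times> B) ?P (\<lambda>d. (\<phi> (snd d), V (fst d))) (\<phi> b, V a) = \<rho> * \<kappa>"
        unfolding pf_def s2 \<rho>_def \<kappa>_def by (subst sum_prod_kernel[where c="V a"]) (use finA finB in auto)
      have pABC: "pf (A \<times> B) ?P (\<lambda>d. (fst d, \<phi> (snd d), V (fst d))) (a, \<phi> b, V a) = p a * \<kappa>"
        unfolding pf_def s3 \<kappa>_def by (subst sum_prod_kernel[where c="V a"]) (use finB in auto)
      have pC: "pf (A \<times> B) ?P (\<lambda>\<omega>. V (fst \<omega>)) (V a) = \<rho> * Kt"
        unfolding pf_def s4 \<rho>_def Kt_def by (subst sum_prod_kernel[where c="V a"]) (use finA finB in auto)
      show "?P d * log 2
     (pf (A \<times> B) ?P (\<lambda>d. (fst d, V (fst d))) (fst d, V (fst d)) *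
      pf (A \<times> B) ?P (\<lambda>d. (\<phi> (snd d), V (fst d))) (\<phi> (snd d), V (fst d)) /
      (pf (A \<times> B) ?P (\<lambda>d. (fst d, \<phi> (snd d), V (fst d))) (fst d, \<phi> (snd d), V (fst d)) *
       pf (A \<times> B) ?P (\<lambda>\<omega>. V (fst \<omega>)) (V (fst d)))) = 0"
      proof (cases "?P d = 0")
        case True then show ?thesis by simp
      next
        case False
        then have pa: "p a \<noteq> 0" and kab: "K (V a) b \<noteq> 0" using ab by auto
        have pa': "p a > 0" using pa assms(2) a by force
        have kab': "K (V a) b > 0" using kab assms(3)[rule_format, of "V a" b] by linarith
        have "\<kappa> \<ge> K (V a) b" unfolding \<kappa>_def using b finB assms(3) by (intro member_le_sum) auto
        then have kp: "\<kappa> > 0" using kab' by linarith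
        have "Kt \<ge> K (V a) b" unfolding Kt_def using b finB assms(3) by (intro member_le_sum) auto
        then have Ktp: "Kt > 0" using kab' by linarith
        have "\<rho> \<ge> p a" unfolding \<rho>_def using a finA assms(2) by (intro member_le_sum) auto
        then have rp: "\<rho> > 0" using pa' by linarith
        have "p a * Kt * (\<rho> * \<kappa>) / (p a * \<kappa> * (\<rho> * Kt)) = 1"
          using pa' kp Ktp rp by (simp add: field_simps)
        then show ?thesis unfolding ab using pAC pBC pABC pC by simp
      qed
    qed
    then show "- (\<Sum>d\<in>A \<times> B. ?P d * log 2
     (pf (A \<times> B) ?P (\<lambda>d. (fst d, V (fst d))) (fst d, V (fst d)) *
      pf (A \<times> B) ?P (\<lambda>d. (\<phi> (snd d), V (fst d))) (\<phi> (snd d), V (fst d)) /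
      (pf (A \<times> B) ?P (\<lambda>d. (fst d, \<phi> (snd d), V (fst d))) (fst d, \<phi> (snd d), V (fst d)) *
       pf (A \<times> B) ?P (\<lambda>\<omega>. V (fst \<omega>)) (V (fst d))))) = 0"
      by (subst sum.neutral, blast, simp)
  qed
qed


lemma sum_T_le:
  fixes M :: nat and a :: real
  assumes "M > 0" "0 < a" "a < 1"
  shows "(\<Sum>w<M. if c = w then 1 - a else a / M) \<le> 1"
proof -
  have "(\<Sum>w<M. if c = w then 1 - a else a / M) = (\<Sum>w<M. a / M + (if c = w then 1 - a - a / M else 0))"
    by (intro sum.cong) auto
  also have "\<dots> = a + (if c < M then 1 - a - a / M else 0)"
    using assms(1) by (simp add: sum.distrib)
  also have "\<dots> \<le> 1" using assms by (auto simp: field_simps)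
  finally show ?thesis .
qed

lemma fano:
  fixes Wv :: "'d \<Rightarrow> nat" and M :: nat and a :: real
  assumes "pmf_on S P" "\<forall>d\<in>S. Wv d < M" "0 < a" "a < 1"
  shows "ce S P Wv Y \<le> - log 2 (1 - a) + (\<Sum>d\<in>S. P d * (if dec (Y d) \<noteq> Wv d then 1 else 0)) * (log 2 M - log 2 a)"
proof -
  have fin: "finite S" and nn: "\<forall>d\<in>S. 0 \<le> P d" and tot: "sum P S = 1"
    using assms unfolding pmf_on_def by auto
  have "S \<noteq> {}" using tot by auto
  then obtain d0 where "d0 \<in> S" by auto
  then have Mpos: "M > 0" using assms(2) by force
  define T where "T = (\<lambda>(w,y). if dec y = w then 1 - a else a / real M)"
  define k where "k = (\<lambda>d. (Wv d, Y d))"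
  define pWY where "pWY = pf S P k"
  define pY where "pY = pf S P Y"
  define \<phi> where "\<phi> = (\<lambda>z. T z * pY (snd z) / pWY z)"
  have Tpos: "T z > 0" for z using assms(3,4) Mpos unfolding T_def by (auto split: prod.splits)
  have nnpf: "0 \<le> pf S P f z" for f :: "'d \<Rightarrow> 'e" and z by (rule pf_nonneg[OF nn])
  have "(\<Sum>d\<in>S. P d * \<phi> (k d)) = (\<Sum>z\<in>k ` S. pWY z * \<phi> z)"
    unfolding pWY_def by (rule sum_group[OF fin])
  also have "\<dots> \<le> (\<Sum>z\<in>k ` S. T z * pY (snd z))"
  proof (intro sum_mono)
    fix z show "pWY z * \<phi> z \<le> T z * pY (snd z)"
    proof (cases "pWY z = 0")
      case True then show ?thesis using Tpos[of z] unfolding pY_def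
        using pf_nonneg[OF nn, of Y "snd z"] by simp
    qed (simp add: \<phi>_def)
  qed
  also have "\<dots> \<le> (\<Sum>z\<in>{..<M} \<times> Y ` S. T z * pY (snd z))"
  proof (rule sum_mono2)
    show "finite ({..<M} \<times> Y ` S)" using fin by auto
    show "k ` S \<subseteq> {..<M} \<times> Y ` S" using assms(2) unfolding k_def by auto
    show "\<And>z. z \<in> {..<M} \<times> Y ` S - k ` S \<Longrightarrow> 0 \<le> T z * pY (snd z)"
      using Tpos unfolding pY_def using pf_nonneg[OF nn, of Y] by (simp add: less_imp_le)
  qed
  also have "\<dots> = (\<Sum>w<M. \<Sum>y\<in>Y ` S. T (w,y) * pY y)"
    by (simp add: sum.cartesian_product case_prod_beta')
  also have "\<dots> = (\<Sum>y\<in>Y ` S. pY y * (\<Sum>w<M. T (w,y)))"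
    by (subst sum.swap) (simp add: sum_distrib_left mult.commute)
  also have "\<dots> \<le> (\<Sum>y\<in>Y ` S. pY y)"
  proof (intro sum_mono)
    fix y
    have "(\<Sum>w<M. T (w,y)) \<le> 1" unfolding T_def using sum_T_le[OF Mpos assms(3,4)] by simp
    then show "pY y * (\<Sum>w<M. T (w,y)) \<le> pY y"
      using pf_nonneg[OF nn, of Y y] unfolding pY_def by (simp add: mult_left_le)
  qed
  also have "\<dots> = sum P S" unfolding pY_def by (rule pf_total[OF fin])
  finally have le: "(\<Sum>d\<in>S. P d * \<phi> (k d)) \<le> sum P S" .
  have pos: "\<forall>d\<in>S. P d > 0 \<longrightarrow> \<phi> (k d) > 0"
  proof (intro ballI impI)
    fix d assume d: "d \<in> S" and Pd: "P d > 0"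
    show "\<phi> (k d) > 0" unfolding \<phi>_def pY_def pWY_def k_def
      using pf_pos[OF fin nn d Pd, of Y] pf_pos[OF fin nn d Pd, of k] Tpos unfolding k_def
      by (auto intro!: divide_pos_pos mult_pos_pos)
  qed
  have G: "(\<Sum>d\<in>S. P d * log 2 (\<phi> (k d))) \<le> 0" by (rule gibbs[OF fin nn pos le])
  have "(\<Sum>d\<in>S. P d * log 2 (\<phi> (k d))) =
     (\<Sum>d\<in>S. P d * log 2 (T (k d))) + (\<Sum>d\<in>S. P d * (log 2 (pY (Y d)) - log 2 (pWY (k d))))"
    unfolding sum.distrib[symmetric]
  proof (intro sum.cong refl)
    fix d assume d: "d \<in> S"
    show "P d * log 2 (\<phi> (k d)) = P d * log 2 (T (k d)) + P d * (log 2 (pY (Y d)) - log 2 (pWY (k d)))"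
    proof (cases "P d = 0")
      case False
      then have Pd: "P d > 0" using nn d by force
      have a1: "pY (Y d) > 0" unfolding pY_def by (rule pf_pos[OF fin nn d Pd])
      have a2: "pWY (k d) > 0" unfolding pWY_def by (rule pf_pos[OF fin nn d Pd])
      have sk: "snd (k d) = Y d" unfolding k_def by simp
      show ?thesis unfolding \<phi>_def sk using a1 a2 Tpos[of "k d"]
        by (simp add: log_mult log_divide algebra_simps)
    qed simp
  qed
  moreover have "ce S P Wv Y = - (\<Sum>d\<in>S. P d * (log 2 (pWY (k d)) - log 2 (pY (Y d))))"
    unfolding ce_def ent_alt[OF fin] pWY_def pY_def k_def
    by (simp add: sum_subtractf right_diff_distrib)
  ultimately have ce_le: "ce S P Wv Y \<le> - (\<Sum>d\<in>S. P d * log 2 (T (k d)))"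
    using G by (simp add: sum_subtractf right_diff_distrib)
  define Pe where "Pe = (\<Sum>d\<in>S. P d * (if dec (Y d) \<noteq> Wv d then 1 else 0))"
  have "(\<Sum>d\<in>S. P d * log 2 (T (k d))) =
        (\<Sum>d\<in>S. P d * log 2 (1 - a) + P d * (if dec (Y d) \<noteq> Wv d then 1 else 0) * (log 2 (a / M) - log 2 (1 - a)))"
    unfolding T_def k_def by (intro sum.cong) (auto simp: algebra_simps)
  also have "\<dots> = log 2 (1 - a) + Pe * (log 2 (a / M) - log 2 (1 - a))"
    unfolding Pe_def sum.distrib using tot
    by (simp add: sum_distrib_right[symmetric] sum_distrib_left[symmetric] mult.commute)
  finally have eqT: "(\<Sum>d\<in>S. P d * log 2 (T (k d))) = log 2 (1 - a) + Pe * (log 2 (a / M) - log 2 (1 - a))" .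
  have Pe0: "Pe \<ge> 0" unfolding Pe_def using nn by (intro sum_nonneg) auto
  have l1: "log 2 (1 - a) \<le> 0" using assms(3,4) by simp
  have la: "log 2 (a / M) = log 2 a - log 2 M" using assms(3) Mpos by (simp add: log_divide)
  have "- (log 2 (1 - a) + Pe * (log 2 (a / M) - log 2 (1 - a))) \<le> - log 2 (1 - a) + Pe * (log 2 M - log 2 a)"
    unfolding la using Pe0 l1 by (simp add: algebra_simps mult_nonneg_nonpos)
  then show ?thesis using ce_le eqT unfolding Pe_def by simp
qed

lemma pmf_on_ts:
  fixes n :: nat
  assumes "pmf_on S0 P0" "n > 0"
  shows "pmf_on (S0 \<times> {..<n}) (\<lambda>(\<omega>,t). P0 \<omega> / n)"
proof -
  have fin: "finite S0" and nn: "\<forall>d\<in>S0. 0 \<le> P0 d" and tot: "sum P0 S0 = 1"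
    using assms unfolding pmf_on_def by auto
  have "sum (\<lambda>(\<omega>,t). P0 \<omega> / n) (S0 \<times> {..<n}) = (\<Sum>\<omega>\<in>S0. \<Sum>t<n. P0 \<omega> / n)"
    by (simp only: sum.cartesian_product)
  also have "\<dots> = 1" using tot assms(2) by (simp add: sum_divide_distrib[symmetric])
  finally show ?thesis unfolding pmf_on_def using fin nn by auto
qed

lemma ent_push2:
  assumes "finite S" "finite S'" "\<pi> ` S \<subseteq> S'" "\<And>s. s \<in> S' \<Longrightarrow> pf S P \<pi> s = P' s"
    "\<And>d. d \<in> S \<Longrightarrow> g d = \<psi> (\<pi> d)"
  shows "ent S P g = ent S' P' \<psi>"
proof -
  have "ent S P g = ent S P (\<lambda>d. \<psi> (\<pi> d))" by (rule ent_cong[OF assms(1)]) (simp add: assms(5))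
  also have "\<dots> = ent S' P' \<psi>" by (rule ent_push[OF assms(1-4)])
  finally show ?thesis .
qed

lemma ts_bound:
  fixes n :: nat and \<pi> :: "nat \<Rightarrow> 'd \<Rightarrow> 's"
  assumes "pmf_on S0 P0" "n > 0" "finite S1" "\<And>t. t < n \<Longrightarrow> \<pi> t ` S0 \<subseteq> S1"
    "\<And>s. s \<in> S1 \<Longrightarrow> pf (S0 \<times> {..<n}) (\<lambda>(\<omega>,t). P0 \<omega> / n) (\<lambda>(\<omega>,t). \<pi> t \<omega>) s = P1 s"
  shows "(\<Sum>t<n. ce S0 P0 (\<lambda>\<omega>. \<alpha> (\<pi> t \<omega>)) (\<lambda>\<omega>. \<beta> (\<pi> t \<omega>))) \<le> real n * ce S1 P1 \<alpha> \<beta>"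
proof -
  have fin: "finite S0" using assms unfolding pmf_on_def by auto
  let ?S = "S0 \<times> {..<n}" and ?P = "\<lambda>(\<omega>,t). P0 \<omega> / real n"
  have pm: "pmf_on ?S ?P" by (rule pmf_on_ts[OF assms(1,2)])
  have finS: "finite ?S" using fin by auto
  have img: "(\<lambda>(\<omega>,t). \<pi> t \<omega>) ` ?S \<subseteq> S1" using assms(4) by auto
  have "ce ?S ?P (\<lambda>(\<omega>,t). \<alpha> (\<pi> t \<omega>)) (\<lambda>(\<omega>,t). (\<beta> (\<pi> t \<omega>), t))
      = (\<Sum>t<n. ce S0 P0 (\<lambda>\<omega>. \<alpha> (\<pi> t \<omega>)) (\<lambda>\<omega>. \<beta> (\<pi> t \<omega>))) / n"
    by (rule ce_ts[OF assms(1,2)])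
  moreover have "ce ?S ?P (\<lambda>(\<omega>,t). \<alpha> (\<pi> t \<omega>)) (\<lambda>(\<omega>,t). (\<beta> (\<pi> t \<omega>), t))
      \<le> ce ?S ?P (\<lambda>(\<omega>,t). \<alpha> (\<pi> t \<omega>)) (\<lambda>(\<omega>,t). \<beta> (\<pi> t \<omega>))"
    by (rule ce_coarse[OF pm]) auto
  moreover have "ce ?S ?P (\<lambda>(\<omega>,t). \<alpha> (\<pi> t \<omega>)) (\<lambda>(\<omega>,t). \<beta> (\<pi> t \<omega>)) = ce S1 P1 \<alpha> \<beta>"
  proof -
    have e1: "(\<lambda>d. ((\<lambda>(\<omega>,t). \<alpha> (\<pi> t \<omega>)) d, (\<lambda>(\<omega>,t). \<beta> (\<pi> t \<omega>)) d))
        = (\<lambda>d. (\<lambda>s. (\<alpha> s, \<beta> s)) ((\<lambda>(\<omega>,t). \<pi> t \<omega>) d))" by (auto simp: fun_eq_iff)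
    have e2: "(\<lambda>(\<omega>,t). \<beta> (\<pi> t \<omega>)) = (\<lambda>d. \<beta> ((\<lambda>(\<omega>,t). \<pi> t \<omega>) d))" by (auto simp: fun_eq_iff)
    have p1: "ent ?S ?P (\<lambda>d. ((\<lambda>(\<omega>,t). \<alpha> (\<pi> t \<omega>)) d, (\<lambda>(\<omega>,t). \<beta> (\<pi> t \<omega>)) d)) = ent S1 P1 (\<lambda>s. (\<alpha> s, \<beta> s))"
      by (rule ent_push2[OF finS assms(3) img assms(5)]) auto
    have p2: "ent ?S ?P (\<lambda>(\<omega>,t). \<beta> (\<pi> t \<omega>)) = ent S1 P1 \<beta>"
      by (rule ent_push2[OF finS assms(3) img assms(5)]) auto
    show ?thesis unfolding ce_def p1 p2 by simp
  qed
  ultimately show ?thesis using assms(2)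
    by (simp add: divide_le_eq mult.commute)
qed

lemma ts_E:
  fixes n :: nat and \<pi> :: "nat \<Rightarrow> 'd \<Rightarrow> 's" and P0 :: "'d \<Rightarrow> real" and P1 :: "'s \<Rightarrow> real"
  assumes "pmf_on S0 P0" "n > 0" "finite S1" "\<And>t. t < n \<Longrightarrow> \<pi> t ` S0 \<subseteq> S1"
    "\<And>s. s \<in> S1 \<Longrightarrow> pf (S0 \<times> {..<n}) (\<lambda>(\<omega>,t). P0 \<omega> / n) (\<lambda>(\<omega>,t). \<pi> t \<omega>) s = P1 s"
  shows "(\<Sum>t<n. \<Sum>\<omega>\<in>S0. P0 \<omega> * \<phi> (\<pi> t \<omega>)) = real n * (\<Sum>s\<in>S1. P1 s * \<phi> s)"
proof -
  have fin: "finite S0" using assms unfolding pmf_on_def by auto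
  let ?S = "S0 \<times> {..<n}" and ?P = "\<lambda>(\<omega>,t). P0 \<omega> / real n"
  have finS: "finite ?S" using fin by auto
  have img: "(\<lambda>(\<omega>,t). \<pi> t \<omega>) ` ?S \<subseteq> S1" using assms(4) by auto
  have "(\<Sum>d\<in>?S. ?P d * \<phi> ((\<lambda>(\<omega>,t). \<pi> t \<omega>) d)) = (\<Sum>s\<in>S1. pf ?S ?P (\<lambda>(\<omega>,t). \<pi> t \<omega>) s * \<phi> s)"
    by (rule E_push[OF finS assms(3) img])
  also have "\<dots> = (\<Sum>s\<in>S1. P1 s * \<phi> s)" using assms(5) by simp
  finally have *: "(\<Sum>d\<in>?S. ?P d * \<phi> ((\<lambda>(\<omega>,t). \<pi> t \<omega>) d)) = (\<Sum>s\<in>S1. P1 s * \<phi> s)" .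
  have "(\<Sum>d\<in>?S. ?P d * \<phi> ((\<lambda>(\<omega>,t). \<pi> t \<omega>) d)) = (\<Sum>\<omega>\<in>S0. \<Sum>t<n. P0 \<omega> / n * \<phi> (\<pi> t \<omega>))"
    by (simp add: sum.cartesian_product case_prod_beta')
  also have "\<dots> = (\<Sum>t<n. \<Sum>\<omega>\<in>S0. P0 \<omega> * \<phi> (\<pi> t \<omega>)) / n"
    by (subst sum.swap) (simp add: sum_divide_distrib)
  finally show ?thesis using * assms(2) by (simp add: divide_eq_eq mult.commute)
qed

lemma pf_ind:
  assumes "finite S"
  shows "pf S P f z = (\<Sum>d\<in>S. if f d = z then P d else 0)"
  unfolding pf_def using sum.inter_filter[OF assms] by simp

lemma sum_PiE_fix:
  fixes f :: "'i \<Rightarrow> 'x \<Rightarrow> real"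
  assumes "finite I" "t \<in> I" "\<And>s. s \<in> I \<Longrightarrow> finite (B s)" "e \<in> B t"
    "\<And>s. s \<in> I \<Longrightarrow> s \<noteq> t \<Longrightarrow> (\<Sum>b\<in>B s. f s b) = 1"
  shows "(\<Sum>g\<in>PiE I B. if g t = e then (\<Prod>s\<in>I. f s (g s)) else 0) = f t e"
proof -
  let ?B = "\<lambda>s. if s = t then {e} else B s"
  have "(\<Sum>g\<in>PiE I B. if g t = e then (\<Prod>s\<in>I. f s (g s)) else 0) = (\<Sum>g\<in>{g\<in>PiE I B. g t = e}. \<Prod>s\<in>I. f s (g s))"
    using assms by (simp add: sum.inter_filter finite_PiE)
  also have "{g\<in>PiE I B. g t = e} = PiE I ?B"
    using assms(2,4) by (auto simp: PiE_def Pi_def)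
  also have "(\<Sum>g\<in>PiE I ?B. \<Prod>s\<in>I. f s (g s)) = (\<Prod>s\<in>I. \<Sum>b\<in>?B s. f s b)"
    by (rule prod_sum_PiE[symmetric]) (use assms in auto)
  also have "\<dots> = (\<Prod>s\<in>I. if s = t then f t e else 1)"
    by (intro prod.cong refl) (use assms in auto)
  also have "\<dots> = f t e" using assms(1,2) by (simp add: prod.delta)
  finally show ?thesis .
qed

lemma sum_PiE_one:
  fixes f :: "'i \<Rightarrow> 'x \<Rightarrow> real"
  assumes "finite I" "\<And>s. s \<in> I \<Longrightarrow> finite (B s)" "\<And>s. s \<in> I \<Longrightarrow> (\<Sum>b\<in>B s. f s b) = 1"
  shows "(\<Sum>g\<in>PiE I B. \<Prod>s\<in>I. f s (g s)) = 1"
proof -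
  have "(\<Sum>g\<in>PiE I B. \<Prod>s\<in>I. f s (g s)) = (\<Prod>s\<in>I. \<Sum>b\<in>B s. f s b)"
    by (rule prod_sum_PiE[symmetric]) (use assms in auto)
  also have "\<dots> = 1" using assms(3) by simp
  finally show ?thesis .
qed

lemma sum_single_times: "sum f ({w} \<times> B) = (\<Sum>b\<in>B. f (w, b))"
proof -
  have "{w} \<times> B = Pair w ` B" by auto
  moreover have "inj_on (Pair w) B" by (auto simp: inj_on_def)
  ultimately show ?thesis by (simp add: sum.reindex)
qed

locale dcode =
  fixes W :: "'a::finite \<Rightarrow> 'b::finite \<Rightarrow> 'c::finite \<Rightarrow> real"
    and M n k :: nat and f1 f2 :: "nat \<Rightarrow> nat" and g1 :: "nat \<Rightarrow> nat \<Rightarrow> 'a" and g2 :: "nat \<Rightarrow> nat \<Rightarrow> 'b"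
    and q :: "'c \<Rightarrow> nat \<Rightarrow> real"
  assumes chan: "is_channel W" and Mpos: "M > 0" and npos: "n > 0"
    and qnn: "\<forall>y u. 0 \<le> q y u" and qsum: "\<forall>y. (\<Sum>u<k. q y u) = 1"
begin

definition YS :: "(nat \<Rightarrow> 'c) set" where "YS = PiE {..<n} (\<lambda>_. UNIV)"
definition US :: "(nat \<Rightarrow> nat) set" where "US = PiE {..<n} (\<lambda>_. {..<k})"
definition Om :: "(nat \<times> (nat \<Rightarrow> 'c) \<times> (nat \<Rightarrow> nat)) set" where "Om = {..<M} \<times> YS \<times> US"
definition Kn :: "nat \<times> nat \<Rightarrow> (nat \<Rightarrow> 'c) \<times> (nat \<Rightarrow> nat) \<Rightarrow> real" where
  "Kn v b = (\<Prod>t<n. W (g1 (fst v) t) (g2 (snd v) t) (fst b t) * q (fst b t) (snd b t))"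
definition Pw :: "nat \<times> (nat \<Rightarrow> 'c) \<times> (nat \<Rightarrow> nat) \<Rightarrow> real" where
  "Pw = (\<lambda>(w, b). 1 / real M * Kn (f1 w, f2 w) b)"
definition pi :: "nat \<Rightarrow> nat \<times> (nat \<Rightarrow> 'c) \<times> (nat \<Rightarrow> nat) \<Rightarrow> 'a \<times> 'b \<times> 'c \<times> nat" where
  "pi t \<omega> = (g1 (f1 (fst \<omega>)) t, g2 (f2 (fst \<omega>)) t, fst (snd \<omega>) t, snd (snd \<omega>) t)"
definition SS :: "('a \<times> 'b \<times> 'c \<times> nat) set" where
  "SS = (UNIV::'a set) \<times> (UNIV::'b set) \<times> (UNIV::'c set) \<times> {..<k}"
definition ptw :: "nat \<Rightarrow> 'a \<Rightarrow> 'b \<Rightarrow> real" where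
  "ptw t a b = (\<Sum>w<M. if g1 (f1 w) t = a \<and> g2 (f2 w) t = b then 1 / real M else 0)"
definition pbar :: "'a \<Rightarrow> 'b \<Rightarrow> real" where
  "pbar a b = (\<Sum>t<n. ptw t a b) / real n"
definition Pbar :: "'a \<times> 'b \<times> 'c \<times> nat \<Rightarrow> real" where
  "Pbar = (\<lambda>(x1, x2, y, u). pbar x1 x2 * W x1 x2 y * q y u)"

lemma Wnn: "0 \<le> W a b c" using chan unfolding is_channel_def by auto
lemma Wsum: "(\<Sum>c\<in>UNIV. W a b c) = 1" using chan unfolding is_channel_def by auto

lemma finYS: "finite YS" unfolding YS_def by (intro finite_PiE) auto
lemma finUS: "finite US" unfolding US_def by (intro finite_PiE) auto
lemma finOm: "finite Om" unfolding Om_def using finYS finUS by auto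
lemma finSS: "finite SS" unfolding SS_def by auto

lemma Kn_split: "Kn v (y, u) = (\<Prod>t<n. W (g1 (fst v) t) (g2 (snd v) t) (y t)) * (\<Prod>t<n. q (y t) (u t))"
  unfolding Kn_def by (simp add: prod.distrib)

lemma Kn_nn: "0 \<le> Kn v b"
  unfolding Kn_def using Wnn qnn by (intro prod_nonneg) (auto intro: mult_nonneg_nonneg)

lemma sum_q_one: "(\<Sum>u\<in>US. \<Prod>t<n. q (y t) (u t)) = 1"
  unfolding US_def by (rule sum_PiE_one) (use qsum in auto)

lemma sum_W_one: "(\<Sum>y\<in>YS. \<Prod>t<n. W (a t) (b t) (y t)) = 1"
  unfolding YS_def by (rule sum_PiE_one) (use Wsum in auto)

lemma sum_Kn: "(\<Sum>y\<in>YS. \<Sum>u\<in>US. Kn v (y, u)) = 1"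
proof -
  have "(\<Sum>y\<in>YS. \<Sum>u\<in>US. Kn v (y, u)) = (\<Sum>y\<in>YS. (\<Prod>t<n. W (g1 (fst v) t) (g2 (snd v) t) (y t)))"
    by (simp add: Kn_split sum_distrib_left[symmetric] sum_q_one)
  also have "\<dots> = 1" by (rule sum_W_one)
  finally show ?thesis .
qed

lemma sum_Om: "(\<Sum>\<omega>\<in>Om. F \<omega>) = (\<Sum>w<M. \<Sum>y\<in>YS. \<Sum>u\<in>US. F (w, y, u))"
  unfolding Om_def by (simp add: sum.cartesian_product)

lemma pmf_Om: "pmf_on Om Pw"
proof -
  have "sum Pw Om = (\<Sum>w<M. 1 / real M * (\<Sum>y\<in>YS. \<Sum>u\<in>US. Kn (f1 w, f2 w) (y, u)))"
    unfolding sum_Om Pw_def by (simp add: sum_distrib_left)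
  also have "\<dots> = 1" using Mpos by (simp add: sum_Kn)
  finally show ?thesis unfolding pmf_on_def Pw_def using finOm Kn_nn Mpos by auto
qed

lemma Pw_nn: "0 \<le> Pw \<omega>" unfolding Pw_def using Kn_nn by (auto split: prod.splits)

lemma pf_fst: "w < M \<Longrightarrow> pf Om Pw fst w = 1 / real M"
proof -
  assume w: "w < M"
  have "{\<omega>\<in>Om. fst \<omega> = w} = {w} \<times> YS \<times> US" unfolding Om_def using w by auto
  then have "pf Om Pw fst w = sum Pw ({w} \<times> YS \<times> US)" unfolding pf_def by simp
  also have "\<dots> = (\<Sum>y\<in>YS. \<Sum>u\<in>US. Pw (w, y, u))"
    by (simp add: sum_single_times sum.cartesian_product)
  also have "\<dots> = 1 / real M * (\<Sum>y\<in>YS. \<Sum>u\<in>US. Kn (f1 w, f2 w) (y, u))"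
    unfolding Pw_def by (simp add: sum_distrib_left)
  also have "\<dots> = 1 / real M" by (simp add: sum_Kn)
  finally show ?thesis .
qed


lemma pi_SS: "t < n \<Longrightarrow> pi t ` Om \<subseteq> SS"
  unfolding pi_def SS_def Om_def US_def by (auto simp: PiE_def Pi_def)

lemma sum_u_fix:
  assumes "t < n" "e < k"
  shows "(\<Sum>u\<in>US. if u t = e then (\<Prod>s<n. q (y s) (u s)) else 0) = q (y t) e"
  unfolding US_def by (rule sum_PiE_fix) (use assms qsum in auto)

lemma sum_y_fix:
  assumes "t < n"
  shows "(\<Sum>y\<in>YS. if y t = c then (\<Prod>s<n. W (a s) (b s) (y s)) else 0) = W (a t) (b t) c"
  unfolding YS_def by (rule sum_PiE_fix) (use assms Wsum in auto)

lemma pf_pi: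
  assumes "t < n" "e < k"
  shows "pf Om Pw (pi t) (a, b, c, e) = ptw t a b * W a b c * q c e"
proof -
  define PW where "PW = (\<lambda>w y. \<Prod>s<n. W (g1 (f1 w) s) (g2 (f2 w) s) (y s))"
  define PQ where "PQ = (\<lambda>(y::nat \<Rightarrow> 'c) (u::nat\<Rightarrow>nat). \<Prod>s<n. q (y s) (u s))"
  have step1: "(if pi t (w, y, u) = (a, b, c, e) then Pw (w, y, u) else 0) =
    (if g1 (f1 w) t = a \<and> g2 (f2 w) t = b then 1 / real M else 0) *
    ((if y t = c then PW w y else 0) * (if u t = e then PQ y u else 0))" for w y u
    unfolding pi_def Pw_def PW_def PQ_def by (simp add: Kn_split)
  have "pf Om Pw (pi t) (a, b, c, e) = (\<Sum>w<M. \<Sum>y\<in>YS. \<Sum>u\<in>US.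
    (if g1 (f1 w) t = a \<and> g2 (f2 w) t = b then 1 / real M else 0) *
    ((if y t = c then PW w y else 0) * (if u t = e then PQ y u else 0)))"
    unfolding pf_ind[OF finOm] sum_Om step1 ..
  also have "\<dots> = (\<Sum>w<M. (if g1 (f1 w) t = a \<and> g2 (f2 w) t = b then 1 / real M else 0) *
     (\<Sum>y\<in>YS. (if y t = c then PW w y else 0) * q c e))"
  proof (intro sum.cong refl)
    fix w
    define C where "C = (if g1 (f1 w) t = a \<and> g2 (f2 w) t = b then 1 / real M else 0)"
    have inner: "(\<Sum>u\<in>US. C * ((if y t = c then PW w y else 0) * (if u t = e then PQ y u else 0)))
       = C * ((if y t = c then PW w y else 0) * q c e)" for y
    proof -
      have "(\<Sum>u\<in>US. if u t = e then PQ y u else 0) = q (y t) e"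
        unfolding PQ_def by (rule sum_u_fix[OF assms])
      then show ?thesis by (simp add: sum_distrib_left[symmetric])
    qed
    show "(\<Sum>y\<in>YS. \<Sum>u\<in>US. (if g1 (f1 w) t = a \<and> g2 (f2 w) t = b then 1 / real M else 0) *
      ((if y t = c then PW w y else 0) * (if u t = e then PQ y u else 0))) =
      (if g1 (f1 w) t = a \<and> g2 (f2 w) t = b then 1 / real M else 0) *
      (\<Sum>y\<in>YS. (if y t = c then PW w y else 0) * q c e)"
      unfolding C_def[symmetric] by (simp only: inner sum_distrib_left)
  qed
  also have "\<dots> = (\<Sum>w<M. (if g1 (f1 w) t = a \<and> g2 (f2 w) t = b then 1 / real M else 0) * (W a b c * q c e))"
  proof (intro sum.cong refl)
    fix w
    have "(\<Sum>y\<in>YS. (if y t = c then PW w y else 0) * q c e) = W (g1 (f1 w) t) (g2 (f2 w) t) c * q c e"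
      unfolding PW_def sum_distrib_right[symmetric]
      using sum_y_fix[OF assms(1), of c "\<lambda>s. g1 (f1 w) s" "\<lambda>s. g2 (f2 w) s"] by simp
    then show "(if g1 (f1 w) t = a \<and> g2 (f2 w) t = b then 1 / real M else 0) * (\<Sum>y\<in>YS. (if y t = c then PW w y else 0) * q c e)
      = (if g1 (f1 w) t = a \<and> g2 (f2 w) t = b then 1 / real M else 0) * (W a b c * q c e)"
      by auto
  qed
  also have "\<dots> = ptw t a b * W a b c * q c e"
    unfolding ptw_def by (simp only: sum_distrib_right[symmetric] mult.assoc)
  finally show ?thesis .
qed

lemma pf_ts_pi:
  assumes "s \<in> SS"
  shows "pf (Om \<times> {..<n}) (\<lambda>(\<omega>,t). Pw \<omega> / real n) (\<lambda>(\<omega>,t). pi t \<omega>) s = Pbar s"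
proof -
  obtain a b c e where s: "s = (a,b,c,e)" by (cases s) auto
  have e: "e < k" using assms s unfolding SS_def by auto
  have "pf (Om \<times> {..<n}) (\<lambda>(\<omega>,t). Pw \<omega> / real n) (\<lambda>(\<omega>,t). pi t \<omega>) s
      = (\<Sum>(\<omega>,t)\<in>Om \<times> {..<n}. if pi t \<omega> = s then Pw \<omega> / real n else 0)"
    unfolding pf_ind[OF finite_cartesian_product[OF finOm finite_lessThan]]
    by (intro sum.cong refl) auto
  also have "\<dots> = (\<Sum>(\<omega>,t)\<in>Om \<times> {..<n}. (if pi t \<omega> = s then Pw \<omega> else 0) / real n)"
    by (intro sum.cong refl) auto
  also have "\<dots> = (\<Sum>\<omega>\<in>Om. \<Sum>t<n. (if pi t \<omega> = s then Pw \<omega> else 0) / real n)"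
    by (simp only: sum.cartesian_product)
  also have "\<dots> = (\<Sum>t<n. (\<Sum>\<omega>\<in>Om. if pi t \<omega> = s then Pw \<omega> else 0)) / real n"
    by (subst sum.swap) (simp add: sum_divide_distrib)
  also have "\<dots> = (\<Sum>t<n. ptw t a b * W a b c * q c e) / real n"
    using pf_pi[OF _ e] unfolding s pf_ind[OF finOm, symmetric] by simp
  also have "\<dots> = Pbar s" unfolding s Pbar_def pbar_def by (simp add: sum_distrib_right[symmetric])
  finally show ?thesis .
qed

end

lemma sum_times_single2: "sum g (A \<times> {u}) = (\<Sum>a\<in>A. g (a, u))"
proof -
  have "A \<times> {u} = (\<lambda>a. (a, u)) ` A" by auto
  moreover have "inj_on (\<lambda>a. (a, u)) A" by (auto simp: inj_on_def)
  ultimately show ?thesis by (simp add: sum.reindex)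
qed

lemma log2_prod:
  fixes F :: "nat \<Rightarrow> real"
  assumes "\<And>t. t < n \<Longrightarrow> F t > 0"
  shows "log 2 (\<Prod>t<n. F t) = (\<Sum>t<n. log 2 (F t))"
proof -
  have "ln (\<Prod>t<n. F t) = (\<Sum>t<n. ln (F t))" by (rule ln_prod) (use assms in force)+
  then show ?thesis unfolding log_def by (simp add: sum_divide_distrib)
qed

context dcode
begin

definition Wf :: "'a \<times> 'b \<times> 'c \<times> nat \<Rightarrow> real" where "Wf = (\<lambda>(a,b,c,e). W a b c)"
definition WQf :: "'a \<times> 'b \<times> 'c \<times> nat \<Rightarrow> real" where "WQf = (\<lambda>(a,b,c,e). W a b c * q c e)"
definition KU :: "'a \<Rightarrow> 'b \<Rightarrow> nat \<Rightarrow> real" where "KU a b e = (\<Sum>c\<in>UNIV. W a b c * q c e)"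
definition KUf :: "'a \<times> 'b \<times> 'c \<times> nat \<Rightarrow> real" where "KUf = (\<lambda>(a,b,c,e). KU a b e)"

lemma Pw_pos_factors:
  assumes "Pw \<omega> > 0" "t < n"
  shows "WQf (pi t \<omega>) > 0" "Wf (pi t \<omega>) > 0" "KUf (pi t \<omega>) > 0"
proof -
  obtain w y u where om: "\<omega> = (w, y, u)" by (cases \<omega>) auto
  have "Kn (f1 w, f2 w) (y, u) \<noteq> 0" using assms(1) unfolding om Pw_def by auto
  then have "W (g1 (f1 w) t) (g2 (f2 w) t) (y t) * q (y t) (u t) \<noteq> 0"
    unfolding Kn_def using assms(2) by (auto simp: prod_zero_iff)
  moreover have "0 \<le> W (g1 (f1 w) t) (g2 (f2 w) t) (y t) * q (y t) (u t)"
    using Wnn qnn by (simp add: mult_nonneg_nonneg)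
  ultimately have pos: "W (g1 (f1 w) t) (g2 (f2 w) t) (y t) * q (y t) (u t) > 0" by linarith
  then show "WQf (pi t \<omega>) > 0" unfolding WQf_def pi_def om by simp
  have "W (g1 (f1 w) t) (g2 (f2 w) t) (y t) \<noteq> 0" using pos by auto
  then show "Wf (pi t \<omega>) > 0" unfolding Wf_def pi_def om using Wnn[of "g1 (f1 w) t" "g2 (f2 w) t" "y t"] by simp
  have "KU (g1 (f1 w) t) (g2 (f2 w) t) (u t) \<ge> W (g1 (f1 w) t) (g2 (f2 w) t) (y t) * q (y t) (u t)"
    unfolding KU_def by (rule member_le_sum) (use Wnn qnn in \<open>auto intro: mult_nonneg_nonneg\<close>)
  then show "KUf (pi t \<omega>) > 0" unfolding KUf_def pi_def om using pos by simp
qed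

lemma E_logprod:
  assumes "\<And>\<omega> t. \<omega> \<in> Om \<Longrightarrow> Pw \<omega> > 0 \<Longrightarrow> t < n \<Longrightarrow> F (pi t \<omega>) > 0"
  shows "(\<Sum>\<omega>\<in>Om. Pw \<omega> * log 2 (\<Prod>t<n. F (pi t \<omega>))) = real n * (\<Sum>s\<in>SS. Pbar s * log 2 (F s))"
proof -
  have "(\<Sum>\<omega>\<in>Om. Pw \<omega> * log 2 (\<Prod>t<n. F (pi t \<omega>))) = (\<Sum>\<omega>\<in>Om. \<Sum>t<n. Pw \<omega> * log 2 (F (pi t \<omega>)))"
  proof (intro sum.cong refl)
    fix \<omega> assume om: "\<omega> \<in> Om"
    show "Pw \<omega> * log 2 (\<Prod>t<n. F (pi t \<omega>)) = (\<Sum>t<n. Pw \<omega> * log 2 (F (pi t \<omega>)))"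
    proof (cases "Pw \<omega> > 0")
      case True
      then show ?thesis using log2_prod[of n "\<lambda>t. F (pi t \<omega>)"] assms[OF om True]
        by (simp add: sum_distrib_left)
    next
      case False
      then have "Pw \<omega> = 0" using Pw_nn[of \<omega>] by linarith
      then show ?thesis by simp
    qed
  qed
  also have "\<dots> = (\<Sum>t<n. \<Sum>\<omega>\<in>Om. Pw \<omega> * log 2 (F (pi t \<omega>)))" by (rule sum.swap)
  also have "\<dots> = real n * (\<Sum>s\<in>SS. Pbar s * log 2 (F s))"
    by (rule ts_E[OF pmf_Om npos finSS pi_SS pf_ts_pi])
  finally show ?thesis .
qed


lemma prod_pos_lt: "(\<And>t. t < n \<Longrightarrow> (F t::real) > 0) \<Longrightarrow> (\<Prod>t<n. F t) > 0"
  by (rule prod_pos) auto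

lemma Om_mem: "\<omega> \<in> Om \<Longrightarrow> \<omega> = (fst \<omega>, fst (snd \<omega>), snd (snd \<omega>)) \<and> fst \<omega> < M \<and> fst (snd \<omega>) \<in> YS \<and> snd (snd \<omega>) \<in> US"
  unfolding Om_def by auto

lemma sum_Pw_u: "(\<Sum>u'\<in>US. Pw (w, y, u')) = 1 / real M * (\<Prod>t<n. W (g1 (f1 w) t) (g2 (f2 w) t) (y t))"
proof -
  have "(\<Sum>u'\<in>US. Pw (w, y, u')) = (1 / real M * (\<Prod>t<n. W (g1 (f1 w) t) (g2 (f2 w) t) (y t))) * (\<Sum>u'\<in>US. \<Prod>t<n. q (y t) (u' t))"
    unfolding Pw_def by (simp add: Kn_split sum_distrib_left mult.assoc)
  then show ?thesis by (simp add: sum_q_one)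
qed

lemma ceYW: "ce Om Pw (\<lambda>\<omega>. fst (snd \<omega>)) fst = - (real n * (\<Sum>s\<in>SS. Pbar s * log 2 (Wf s)))"
proof -
  have "ce Om Pw (\<lambda>\<omega>. fst (snd \<omega>)) fst = - (\<Sum>\<omega>\<in>Om. Pw \<omega> * log 2 (\<Prod>t<n. Wf (pi t \<omega>)))"
  proof (rule ce_kernel[OF finOm])
    show "\<forall>d\<in>Om. 0 \<le> Pw d" using Pw_nn by auto
    fix \<omega> assume om: "\<omega> \<in> Om" and P: "Pw \<omega> > 0"
    obtain w y u where o: "\<omega> = (w,y,u)" by (cases \<omega>) auto
    have w: "w < M" and y: "y \<in> YS" using om o unfolding Om_def by auto
    have "{\<omega>'\<in>Om. (fst (snd \<omega>'), fst \<omega>') = (y, w)} = {w} \<times> {y} \<times> US" using w y unfolding Om_def by auto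
    then have "pf Om Pw (\<lambda>\<omega>. (fst (snd \<omega>), fst \<omega>)) (y, w) = sum Pw ({w} \<times> {y} \<times> US)" unfolding pf_def by simp
    also have "\<dots> = (\<Sum>u'\<in>US. Pw (w, y, u'))" by (simp add: sum_single_times)
    also have "\<dots> = 1 / real M * (\<Prod>t<n. W (g1 (f1 w) t) (g2 (f2 w) t) (y t))"
      by (rule sum_Pw_u)
    finally have "pf Om Pw (\<lambda>\<omega>. (fst (snd \<omega>), fst \<omega>)) (y, w) = pf Om Pw fst w * (\<Prod>t<n. Wf (pi t \<omega>))"
      unfolding pf_fst[OF w] o pi_def Wf_def by simp
    moreover have "(\<Prod>t<n. Wf (pi t \<omega>)) > 0" by (rule prod_pos_lt) (rule Pw_pos_factors[OF P])
    ultimately show "(\<Prod>t<n. Wf (pi t \<omega>)) > 0 \<and>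
      pf Om Pw (\<lambda>\<omega>. (fst (snd \<omega>), fst \<omega>)) (fst (snd \<omega>), fst \<omega>) = pf Om Pw fst (fst \<omega>) * (\<Prod>t<n. Wf (pi t \<omega>))"
      unfolding o by simp
  qed
  also have "\<dots> = - (real n * (\<Sum>s\<in>SS. Pbar s * log 2 (Wf s)))"
    using E_logprod[of Wf] Pw_pos_factors by simp
  finally show ?thesis .
qed

lemma ceBW: "ce Om Pw snd fst = - (real n * (\<Sum>s\<in>SS. Pbar s * log 2 (WQf s)))"
proof -
  have "ce Om Pw snd fst = - (\<Sum>\<omega>\<in>Om. Pw \<omega> * log 2 (\<Prod>t<n. WQf (pi t \<omega>)))"
  proof (rule ce_kernel[OF finOm])
    show "\<forall>d\<in>Om. 0 \<le> Pw d" using Pw_nn by auto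
    fix \<omega> assume om: "\<omega> \<in> Om" and P: "Pw \<omega> > 0"
    obtain w b where o: "\<omega> = (w,b)" by (cases \<omega>) auto
    have w: "w < M" using om o unfolding Om_def by auto
    have "{\<omega>'\<in>Om. (snd \<omega>', fst \<omega>') = (b, w)} = {\<omega>}" using om o by auto
    then have "pf Om Pw (\<lambda>\<omega>. (snd \<omega>, fst \<omega>)) (b, w) = Pw \<omega>" unfolding pf_def by simp
    also have "\<dots> = 1 / real M * Kn (f1 w, f2 w) b" unfolding o Pw_def by simp
    also have "\<dots> = pf Om Pw fst w * (\<Prod>t<n. WQf (pi t \<omega>))"
      unfolding pf_fst[OF w] by (simp add: o pi_def WQf_def Kn_def)
    finally have "pf Om Pw (\<lambda>\<omega>. (snd \<omega>, fst \<omega>)) (b, w) = pf Om Pw fst w * (\<Prod>t<n. WQf (pi t \<omega>))" .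
    moreover have "(\<Prod>t<n. WQf (pi t \<omega>)) > 0" by (rule prod_pos_lt) (rule Pw_pos_factors[OF P])
    ultimately show "(\<Prod>t<n. WQf (pi t \<omega>)) > 0 \<and>
      pf Om Pw (\<lambda>\<omega>. (snd \<omega>, fst \<omega>)) (snd \<omega>, fst \<omega>) = pf Om Pw fst (fst \<omega>) * (\<Prod>t<n. WQf (pi t \<omega>))"
      unfolding o by simp
  qed
  also have "\<dots> = - (real n * (\<Sum>s\<in>SS. Pbar s * log 2 (WQf s)))"
    using E_logprod[of WQf] Pw_pos_factors by simp
  finally show ?thesis .
qed

lemma ceUW: "ce Om Pw (\<lambda>\<omega>. snd (snd \<omega>)) fst = - (real n * (\<Sum>s\<in>SS. Pbar s * log 2 (KUf s)))"
proof -
  have "ce Om Pw (\<lambda>\<omega>. snd (snd \<omega>)) fst = - (\<Sum>\<omega>\<in>Om. Pw \<omega> * log 2 (\<Prod>t<n. KUf (pi t \<omega>)))"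
  proof (rule ce_kernel[OF finOm])
    show "\<forall>d\<in>Om. 0 \<le> Pw d" using Pw_nn by auto
    fix \<omega> assume om: "\<omega> \<in> Om" and P: "Pw \<omega> > 0"
    obtain w y u where o: "\<omega> = (w,y,u)" by (cases \<omega>) auto
    have w: "w < M" and u: "u \<in> US" using om o unfolding Om_def by auto
    have "{\<omega>'\<in>Om. (snd (snd \<omega>'), fst \<omega>') = (u, w)} = {w} \<times> YS \<times> {u}" using w u unfolding Om_def by auto
    then have "pf Om Pw (\<lambda>\<omega>. (snd (snd \<omega>), fst \<omega>)) (u, w) = sum Pw ({w} \<times> YS \<times> {u})" unfolding pf_def by simp
    also have "\<dots> = (\<Sum>y'\<in>YS. Pw (w, y', u))" by (simp add: sum_single_times sum_times_single2)
    also have "\<dots> = 1 / real M * (\<Sum>y'\<in>YS. \<Prod>t<n. W (g1 (f1 w) t) (g2 (f2 w) t) (y' t) * q (y' t) (u t))"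
      unfolding Pw_def Kn_def by (simp add: sum_distrib_left)
    also have "(\<Sum>y'\<in>YS. \<Prod>t<n. W (g1 (f1 w) t) (g2 (f2 w) t) (y' t) * q (y' t) (u t))
        = (\<Prod>t<n. \<Sum>c\<in>UNIV. W (g1 (f1 w) t) (g2 (f2 w) t) c * q c (u t))"
      unfolding YS_def by (rule prod_sum_PiE[symmetric]) auto
    finally have "pf Om Pw (\<lambda>\<omega>. (snd (snd \<omega>), fst \<omega>)) (u, w) = pf Om Pw fst w * (\<Prod>t<n. KUf (pi t \<omega>))"
      unfolding pf_fst[OF w] o pi_def KUf_def KU_def by simp
    moreover have "(\<Prod>t<n. KUf (pi t \<omega>)) > 0" by (rule prod_pos_lt) (rule Pw_pos_factors[OF P])
    ultimately show "(\<Prod>t<n. KUf (pi t \<omega>)) > 0 \<and>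
      pf Om Pw (\<lambda>\<omega>. (snd (snd \<omega>), fst \<omega>)) (snd (snd \<omega>), fst \<omega>) = pf Om Pw fst (fst \<omega>) * (\<Prod>t<n. KUf (pi t \<omega>))"
      unfolding o by simp
  qed
  also have "\<dots> = - (real n * (\<Sum>s\<in>SS. Pbar s * log 2 (KUf s)))"
    using E_logprod[of KUf] Pw_pos_factors by simp
  finally show ?thesis .
qed

end

context dcode
begin

definition XS :: "'a \<times> 'b \<times> 'c \<times> nat \<Rightarrow> 'a \<times> 'b" where "XS = (\<lambda>(x1, x2, y, u). (x1, x2))"

lemma ptw_nn: "0 \<le> ptw t a b" unfolding ptw_def by (intro sum_nonneg) auto
lemma pbar_nn: "0 \<le> pbar a b" unfolding pbar_def using ptw_nn by (intro divide_nonneg_nonneg sum_nonneg) auto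

lemma ptw_sum: "(\<Sum>a\<in>UNIV. \<Sum>b\<in>UNIV. ptw t a b) = 1"
proof -
  have "(\<Sum>a\<in>UNIV. \<Sum>b\<in>UNIV. ptw t a b) = (\<Sum>w<M. \<Sum>a\<in>UNIV. \<Sum>b\<in>UNIV. if g1 (f1 w) t = a \<and> g2 (f2 w) t = b then 1 / real M else 0)"
    unfolding ptw_def by (simp add: sum.swap[of _ "{..<M}"])
  also have "\<dots> = (\<Sum>w<M. 1 / real M)"
  proof (intro sum.cong refl)
    fix w
    have "(\<Sum>a\<in>UNIV. \<Sum>b\<in>UNIV. if g1 (f1 w) t = a \<and> g2 (f2 w) t = b then 1 / real M else 0)
      = (\<Sum>a\<in>UNIV. if g1 (f1 w) t = a then 1 / real M else 0)"
      by (intro sum.cong refl) (auto simp: sum.delta)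
    also have "\<dots> = 1 / real M" by (simp add: sum.delta)
    finally show "(\<Sum>a\<in>UNIV. \<Sum>b\<in>UNIV. if g1 (f1 w) t = a \<and> g2 (f2 w) t = b then 1 / real M else 0) = 1 / real M" .
  qed
  also have "\<dots> = 1" using Mpos by simp
  finally show ?thesis .
qed

lemma pbar_sum: "(\<Sum>a\<in>UNIV. \<Sum>b\<in>UNIV. pbar a b) = 1"
proof -
  have "(\<Sum>a\<in>UNIV. \<Sum>b\<in>UNIV. pbar a b) = (\<Sum>t<n. \<Sum>a\<in>UNIV. \<Sum>b\<in>UNIV. ptw t a b) / real n"
    unfolding pbar_def by (simp add: sum_divide_distrib[symmetric] sum.swap[of _ "{..<n}"])
  also have "\<dots> = 1" using npos by (simp add: ptw_sum)
  finally show ?thesis .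
qed

lemma pbar_input: "pbar \<in> input_pmfs"
  unfolding input_pmfs_def using pbar_nn pbar_sum by auto

lemma sum_SS: "(\<Sum>s\<in>SS. F s) = (\<Sum>a\<in>UNIV. \<Sum>b\<in>UNIV. \<Sum>c\<in>UNIV. \<Sum>e<k. F (a, b, c, e))"
  unfolding SS_def by (simp add: sum.cartesian_product)

lemma Pbar_nn: "0 \<le> Pbar s"
  unfolding Pbar_def using pbar_nn Wnn qnn by (auto split: prod.splits intro!: mult_nonneg_nonneg)

lemma sum_Wq: "(\<Sum>c\<in>UNIV. \<Sum>e<k. W a b c * q c e) = 1"
proof -
  have "(\<Sum>c\<in>UNIV. \<Sum>e<k. W a b c * q c e) = (\<Sum>c\<in>UNIV. W a b c)"
    by (simp add: sum_distrib_left[symmetric] qsum)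
  then show ?thesis using Wsum by simp
qed

lemma pmf_SS: "pmf_on SS Pbar"
proof -
  have "sum Pbar SS = (\<Sum>a\<in>UNIV. \<Sum>b\<in>UNIV. pbar a b * (\<Sum>c\<in>UNIV. \<Sum>e<k. W a b c * q c e))"
    unfolding sum_SS Pbar_def by (simp add: sum_distrib_left mult.assoc)
  also have "\<dots> = 1" by (simp add: sum_Wq pbar_sum)
  finally show ?thesis unfolding pmf_on_def using finSS Pbar_nn by auto
qed

lemma pf_XS: "pf SS Pbar XS (a, b) = pbar a b"
proof -
  have "{s\<in>SS. XS s = (a,b)} = {a} \<times> {b} \<times> UNIV \<times> {..<k}" unfolding SS_def XS_def by auto
  then have "pf SS Pbar XS (a,b) = (\<Sum>c\<in>UNIV. \<Sum>e<k. Pbar (a,b,c,e))"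
    unfolding pf_def by (simp add: sum_single_times sum.cartesian_product)
  also have "\<dots> = pbar a b * (\<Sum>c\<in>UNIV. \<Sum>e<k. W a b c * q c e)"
    unfolding Pbar_def by (simp add: sum_distrib_left mult.assoc)
  finally show ?thesis by (simp add: sum_Wq)
qed

lemma Pbar_pos:
  assumes "Pbar s > 0"
  shows "Wf s > 0" "WQf s > 0" "KUf s > 0"
proof -
  obtain a b c e where s: "s = (a,b,c,e)" by (cases s) auto
  have ne: "W a b c * q c e \<noteq> 0" using assms unfolding s Pbar_def by auto
  have "0 \<le> W a b c * q c e" using Wnn qnn by (simp add: mult_nonneg_nonneg)
  then have pos: "W a b c * q c e > 0" using ne by linarith
  then show "WQf s > 0" unfolding s WQf_def by simp
  show "Wf s > 0" unfolding s Wf_def using pos Wnn[of a b c] ne by (cases "W a b c = 0") auto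
  have "KU a b e \<ge> W a b c * q c e"
    unfolding KU_def by (rule member_le_sum) (use Wnn qnn in \<open>auto intro: mult_nonneg_nonneg\<close>)
  then show "KUf s > 0" unfolding s KUf_def using pos by simp
qed

lemma ceS_YX: "ce SS Pbar (\<lambda>(x1, x2, y, u). y) XS = - (\<Sum>s\<in>SS. Pbar s * log 2 (Wf s))"
proof (rule ce_kernel[OF finSS])
  show "\<forall>d\<in>SS. 0 \<le> Pbar d" using Pbar_nn by auto
  fix s assume sS: "s \<in> SS" and P: "Pbar s > 0"
  obtain a b c e where s: "s = (a,b,c,e)" by (cases s) auto
  have "{s'\<in>SS. ((\<lambda>(x1, x2, y, u). y) s', XS s') = (c, (a,b))} = {a} \<times> {b} \<times> {c} \<times> {..<k}"
    unfolding SS_def XS_def by auto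
  then have "pf SS Pbar (\<lambda>s. ((\<lambda>(x1, x2, y, u). y) s, XS s)) (c, (a,b)) = (\<Sum>e<k. Pbar (a,b,c,e))"
    unfolding pf_def by (simp add: sum_single_times)
  also have "\<dots> = pbar a b * W a b c" unfolding Pbar_def by (simp add: sum_distrib_left[symmetric] qsum)
  finally have pfe: "pf SS Pbar (\<lambda>s. ((\<lambda>(x1, x2, y, u). y) s, XS s)) (c, (a,b)) = pbar a b * W a b c" .
  have e1: "(\<lambda>(x1, x2, y, u). y) s = c" "XS s = (a,b)" "Wf s = W a b c" by (simp_all add: s XS_def Wf_def)
  show "Wf s > 0 \<and> pf SS Pbar (\<lambda>s. ((\<lambda>(x1, x2, y, u). y) s, XS s)) ((\<lambda>(x1, x2, y, u). y) s, XS s) = pf SS Pbar XS (XS s) * Wf s"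
    unfolding e1 pfe pf_XS using Pbar_pos(1)[OF P] e1(3) by simp
qed

lemma ceS_BX: "ce SS Pbar (\<lambda>(x1, x2, y, u). (y, u)) XS = - (\<Sum>s\<in>SS. Pbar s * log 2 (WQf s))"
proof (rule ce_kernel[OF finSS])
  show "\<forall>d\<in>SS. 0 \<le> Pbar d" using Pbar_nn by auto
  fix s assume sS: "s \<in> SS" and P: "Pbar s > 0"
  obtain a b c e where s: "s = (a,b,c,e)" by (cases s) auto
  have "{s'\<in>SS. ((\<lambda>(x1, x2, y, u). (y, u)) s', XS s') = ((c,e), (a,b))} = {s}"
    using sS unfolding s SS_def XS_def by auto
  then have "pf SS Pbar (\<lambda>s. ((\<lambda>(x1, x2, y, u). (y, u)) s, XS s)) ((c,e), (a,b)) = Pbar s"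
    unfolding pf_def by simp
  then have pfe: "pf SS Pbar (\<lambda>s. ((\<lambda>(x1, x2, y, u). (y, u)) s, XS s)) ((c,e), (a,b)) = pbar a b * WQf s"
    unfolding s Pbar_def WQf_def by simp
  have e1: "(\<lambda>(x1, x2, y, u). (y, u)) s = (c,e)" "XS s = (a,b)" by (simp_all add: s XS_def)
  show "WQf s > 0 \<and> pf SS Pbar (\<lambda>s. ((\<lambda>(x1, x2, y, u). (y, u)) s, XS s)) ((\<lambda>(x1, x2, y, u). (y, u)) s, XS s) = pf SS Pbar XS (XS s) * WQf s"
    unfolding e1 pfe pf_XS using Pbar_pos(2)[OF P] by simp
qed

lemma ceS_UX: "ce SS Pbar (\<lambda>(x1, x2, y, u). u) XS = - (\<Sum>s\<in>SS. Pbar s * log 2 (KUf s))"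
proof (rule ce_kernel[OF finSS])
  show "\<forall>d\<in>SS. 0 \<le> Pbar d" using Pbar_nn by auto
  fix s assume sS: "s \<in> SS" and P: "Pbar s > 0"
  obtain a b c e where s: "s = (a,b,c,e)" by (cases s) auto
  have e: "e < k" using sS s unfolding SS_def by auto
  have "{s'\<in>SS. ((\<lambda>(x1, x2, y, u). u) s', XS s') = (e, (a,b))} = {a} \<times> {b} \<times> UNIV \<times> {e}"
    using e unfolding SS_def XS_def by auto
  then have "pf SS Pbar (\<lambda>s. ((\<lambda>(x1, x2, y, u). u) s, XS s)) (e, (a,b)) = (\<Sum>c'\<in>UNIV. Pbar (a,b,c',e))"
    unfolding pf_def by (simp add: sum_single_times sum_times_single2)
  also have "\<dots> = pbar a b * KU a b e" unfolding Pbar_def KU_def by (simp add: sum_distrib_left mult.assoc)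
  finally have pfe: "pf SS Pbar (\<lambda>s. ((\<lambda>(x1, x2, y, u). u) s, XS s)) (e, (a,b)) = pbar a b * KU a b e" .
  have e1: "(\<lambda>(x1, x2, y, u). u) s = e" "XS s = (a,b)" "KUf s = KU a b e" by (simp_all add: s XS_def KUf_def)
  show "KUf s > 0 \<and> pf SS Pbar (\<lambda>s. ((\<lambda>(x1, x2, y, u). u) s, XS s)) ((\<lambda>(x1, x2, y, u). u) s, XS s) = pf SS Pbar XS (XS s) * KUf s"
    unfolding e1 pfe pf_XS using Pbar_pos(3)[OF P] e1(3) by simp
qed

end

context dcode
begin

lemma Om_fst: "\<omega> \<in> Om \<Longrightarrow> fst \<omega> < M" unfolding Om_def by auto

lemma eW: "ent Om Pw fst = log 2 (real M)"
proof -
  have "ent Om Pw fst = - (\<Sum>\<omega>\<in>Om. Pw \<omega> * log 2 (1 / real M))"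
    unfolding ent_alt[OF finOm] using pf_fst Om_fst by (intro arg_cong[where f=uminus] sum.cong refl) auto
  also have "\<dots> = log 2 (real M)"
    using pmf_Om Mpos unfolding pmf_on_def by (simp add: sum_negf sum_distrib_right[symmetric] log_divide)
  finally show ?thesis .
qed

lemma eV1: "ent Om Pw (\<lambda>\<omega>. f1 (fst \<omega>)) = ent {..<M} (\<lambda>_. 1 / real M) f1"
  by (rule ent_push2[OF finOm finite_lessThan, of fst]) (use pf_fst Om_fst in auto)

lemma eV2: "ent Om Pw (\<lambda>\<omega>. f2 (fst \<omega>)) = ent {..<M} (\<lambda>_. 1 / real M) f2"
  by (rule ent_push2[OF finOm finite_lessThan, of fst]) (use pf_fst Om_fst in auto)

lemma markov_Om: "cmi Om Pw fst (\<lambda>\<omega>. \<phi> (snd \<omega>)) (\<lambda>\<omega>. (f1 (fst \<omega>), f2 (fst \<omega>))) = 0"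
proof -
  have "cmi ({..<M} \<times> (YS \<times> US)) (\<lambda>(a,b). (\<lambda>_. 1 / real M) a * Kn ((\<lambda>w. (f1 w, f2 w)) a) b) fst
     (\<lambda>\<omega>. \<phi> (snd \<omega>)) (\<lambda>\<omega>. (\<lambda>w. (f1 w, f2 w)) (fst \<omega>)) = 0"
  proof (rule markov)
    show "pmf_on ({..<M} \<times> YS \<times> US) (\<lambda>(a, b). 1 / real M * Kn (f1 a, f2 a) b)"
      using pmf_Om unfolding Om_def Pw_def .
    show "\<forall>a\<in>{..<M}. 0 \<le> 1 / real M" by simp
    show "\<forall>x b. 0 \<le> Kn x b" using Kn_nn by auto
  qed
  then show ?thesis unfolding Om_def Pw_def by simp
qed

lemma ent_unit: "ent Om Pw (\<lambda>_. ()) = 0"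
  using ent_const[OF finOm] pmf_Om unfolding pmf_on_def by auto

lemma bound_I:
  "log 2 (real M) \<le> ent Om Pw (\<lambda>\<omega>. f1 (fst \<omega>)) + ent Om Pw (\<lambda>\<omega>. f2 (fst \<omega>)) + ce Om Pw fst (\<lambda>\<omega>. fst (snd \<omega>))"
proof -
  let ?V = "\<lambda>\<omega>. (f1 (fst \<omega>), f2 (fst \<omega>))" and ?Y = "\<lambda>\<omega>. fst (snd \<omega>)"
  have c1: "ent Om Pw fst = ent Om Pw (\<lambda>\<omega>. (fst \<omega>, ?V \<omega>))" by (rule ent_cong[OF finOm]) auto
  have c2: "cmi Om Pw fst ?Y ?V = 0" by (rule markov_Om)
  have c3: "ce Om Pw fst (\<lambda>\<omega>. (?Y \<omega>, ?V \<omega>)) \<le> ce Om Pw fst ?Y" by (rule ce_coarse[OF pmf_Om]) auto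
  have c4: "0 \<le> cmi Om Pw (\<lambda>\<omega>. f1 (fst \<omega>)) (\<lambda>\<omega>. f2 (fst \<omega>)) (\<lambda>_. ())" by (rule cmi_nonneg[OF pmf_Om])
  have c5: "ent Om Pw (\<lambda>\<omega>. (f1 (fst \<omega>), ())) = ent Om Pw (\<lambda>\<omega>. f1 (fst \<omega>))" by (rule ent_cong[OF finOm]) auto
  have c6: "ent Om Pw (\<lambda>\<omega>. (f2 (fst \<omega>), ())) = ent Om Pw (\<lambda>\<omega>. f2 (fst \<omega>))" by (rule ent_cong[OF finOm]) auto
  have c7: "ent Om Pw (\<lambda>\<omega>. (f1 (fst \<omega>), f2 (fst \<omega>), ())) = ent Om Pw ?V" by (rule ent_cong[OF finOm]) auto
  show ?thesis using c1 c2 c3 c4 c5 c6 c7 eW ent_unit unfolding cmi_def ce_def by linarith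
qed


lemma TS: "(\<Sum>t<n. ce Om Pw (\<lambda>\<omega>. \<alpha> (pi t \<omega>)) (\<lambda>\<omega>. \<beta> (pi t \<omega>))) \<le> real n * ce SS Pbar \<alpha> \<beta>"
  by (rule ts_bound[OF pmf_Om npos finSS pi_SS pf_ts_pi])

lemma Yn_sub:
  assumes "\<And>t d d'. t < n \<Longrightarrow> d \<in> Om \<Longrightarrow> d' \<in> Om \<Longrightarrow> G d = G d' \<Longrightarrow> \<gamma> (pi t d) = \<gamma> (pi t d')"
  shows "ce Om Pw (\<lambda>\<omega>. fst (snd \<omega>)) G \<le> (\<Sum>t<n. ce Om Pw (\<lambda>\<omega>. (\<lambda>(x1, x2, y, u). y) (pi t \<omega>)) (\<lambda>\<omega>. \<gamma> (pi t \<omega>)))"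
proof -
  have "ce Om Pw (\<lambda>\<omega>. fst (snd \<omega>)) G = ce Om Pw (\<lambda>\<omega>. \<lambda>t\<in>{..<n}. (\<lambda>(x1, x2, y, u). y) (pi t \<omega>)) G"
  proof (rule ce_cong[OF finOm])
    fix d d' assume d: "d \<in> Om" "d' \<in> Om"
    have "\<And>d. d \<in> Om \<Longrightarrow> (\<lambda>t\<in>{..<n}. (\<lambda>(x1, x2, y, u). y) (pi t d)) = fst (snd d)"
    proof -
      fix d assume "d \<in> Om"
      then have "fst (snd d) \<in> YS" unfolding Om_def by auto
      then show "(\<lambda>t\<in>{..<n}. (\<lambda>(x1, x2, y, u). y) (pi t d)) = fst (snd d)"
        unfolding YS_def pi_def by (auto simp: fun_eq_iff PiE_def extensional_def)
    qed
    then show "fst (snd d) = fst (snd d') \<longleftrightarrow> (\<lambda>t\<in>{..<n}. (\<lambda>(x1, x2, y, u). y) (pi t d)) = (\<lambda>t\<in>{..<n}. (\<lambda>(x1, x2, y, u). y) (pi t d'))"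
      using d by simp
  qed simp
  also have "\<dots> \<le> (\<Sum>t<n. ce Om Pw (\<lambda>\<omega>. (\<lambda>(x1, x2, y, u). y) (pi t \<omega>)) (\<lambda>\<omega>. \<gamma> (pi t \<omega>)))"
    by (rule subadd[OF pmf_Om]) (rule assms, simp_all)
  finally show ?thesis .
qed

lemma Un_sub:
  assumes "\<And>t d d'. t < n \<Longrightarrow> d \<in> Om \<Longrightarrow> d' \<in> Om \<Longrightarrow> G d = G d' \<Longrightarrow> \<gamma> (pi t d) = \<gamma> (pi t d')"
  shows "ce Om Pw (\<lambda>\<omega>. snd (snd \<omega>)) G \<le> (\<Sum>t<n. ce Om Pw (\<lambda>\<omega>. (\<lambda>(x1, x2, y, u). u) (pi t \<omega>)) (\<lambda>\<omega>. \<gamma> (pi t \<omega>)))"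
proof -
  have "ce Om Pw (\<lambda>\<omega>. snd (snd \<omega>)) G = ce Om Pw (\<lambda>\<omega>. \<lambda>t\<in>{..<n}. (\<lambda>(x1, x2, y, u). u) (pi t \<omega>)) G"
  proof (rule ce_cong[OF finOm])
    fix d d' assume d: "d \<in> Om" "d' \<in> Om"
    have "\<And>d. d \<in> Om \<Longrightarrow> (\<lambda>t\<in>{..<n}. (\<lambda>(x1, x2, y, u). u) (pi t d)) = snd (snd d)"
    proof -
      fix d assume "d \<in> Om"
      then have "snd (snd d) \<in> US" unfolding Om_def by auto
      then show "(\<lambda>t\<in>{..<n}. (\<lambda>(x1, x2, y, u). u) (pi t d)) = snd (snd d)"
        unfolding US_def pi_def by (auto simp: fun_eq_iff PiE_def extensional_def)
    qed
    then show "snd (snd d) = snd (snd d') \<longleftrightarrow> (\<lambda>t\<in>{..<n}. (\<lambda>(x1, x2, y, u). u) (pi t d)) = (\<lambda>t\<in>{..<n}. (\<lambda>(x1, x2, y, u). u) (pi t d'))"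
      using d by simp
  qed simp
  also have "\<dots> \<le> (\<Sum>t<n. ce Om Pw (\<lambda>\<omega>. (\<lambda>(x1, x2, y, u). u) (pi t \<omega>)) (\<lambda>\<omega>. \<gamma> (pi t \<omega>)))"
    by (rule subadd[OF pmf_Om]) (rule assms, simp_all)
  finally show ?thesis .
qed

lemma bound_II:
  "log 2 (real M) \<le> ent Om Pw (\<lambda>\<omega>. f1 (fst \<omega>)) + ce Om Pw fst (\<lambda>\<omega>. fst (snd \<omega>))
     + real n * cmi SS Pbar (\<lambda>(x1, x2, y, u). x2) (\<lambda>(x1, x2, y, u). y) (\<lambda>(x1, x2, y, u). x1)"
proof -
  let ?V1 = "\<lambda>\<omega>. f1 (fst \<omega>)" and ?Y = "\<lambda>\<omega>. fst (snd \<omega>)"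
  let ?X1 = "\<lambda>(x1::'a, x2::'b, y::'c, u::nat). x1" and ?X2 = "\<lambda>(x1::'a, x2::'b, y::'c, u::nat). x2"
    and ?Ys = "\<lambda>(x1::'a, x2::'b, y::'c, u::nat). y"
  have c1: "ent Om Pw fst = ent Om Pw (\<lambda>\<omega>. (fst \<omega>, ?V1 \<omega>))" by (rule ent_cong[OF finOm]) auto
  have c2: "ce Om Pw fst (\<lambda>\<omega>. (?Y \<omega>, ?V1 \<omega>)) \<le> ce Om Pw fst ?Y" by (rule ce_coarse[OF pmf_Om]) auto
  have c3: "ent Om Pw (\<lambda>\<omega>. (?Y \<omega>, fst \<omega>, ?V1 \<omega>)) = ent Om Pw (\<lambda>\<omega>. (fst \<omega>, ?Y \<omega>, ?V1 \<omega>))"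
    by (rule ent_cong[OF finOm]) auto
  have c4: "ce Om Pw ?Y (\<lambda>\<omega>. (fst \<omega>, ?V1 \<omega>)) = ce Om Pw ?Y fst" by (rule ce_cong[OF finOm]) auto
  have c5: "ce Om Pw ?Y ?V1 \<le> (\<Sum>t<n. ce Om Pw (\<lambda>\<omega>. ?Ys (pi t \<omega>)) (\<lambda>\<omega>. ?X1 (pi t \<omega>)))"
    by (rule Yn_sub) (auto simp: pi_def)
  have c6: "(\<Sum>t<n. ce Om Pw (\<lambda>\<omega>. ?Ys (pi t \<omega>)) (\<lambda>\<omega>. ?X1 (pi t \<omega>))) \<le> real n * ce SS Pbar ?Ys ?X1"
    by (rule TS)
  have c7: "ce Om Pw ?Y fst = - (real n * (\<Sum>s\<in>SS. Pbar s * log 2 (Wf s)))" by (rule ceYW)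
  have s1: "ent SS Pbar (\<lambda>d. (?X2 d, ?X1 d)) = ent SS Pbar XS" by (rule ent_cong[OF finSS]) (auto simp: XS_def)
  have s2: "ent SS Pbar (\<lambda>d. (?X2 d, ?Ys d, ?X1 d)) = ent SS Pbar (\<lambda>d. (?Ys d, XS d))"
    by (rule ent_cong[OF finSS]) (auto simp: XS_def)
  have s3: "ce SS Pbar ?Ys XS = - (\<Sum>s\<in>SS. Pbar s * log 2 (Wf s))" by (rule ceS_YX)
  have om: "log 2 (real M) \<le> ent Om Pw ?V1 + ce Om Pw fst ?Y + ce Om Pw ?Y ?V1 - ce Om Pw ?Y fst"
    using c1 c2 c3 c4 eW unfolding ce_def by linarith
  have sId: "cmi SS Pbar ?X2 ?Ys ?X1 = ce SS Pbar ?Ys ?X1 + (\<Sum>s\<in>SS. Pbar s * log 2 (Wf s))"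
    using s1 s2 s3 unfolding cmi_def ce_def by linarith
  then have "real n * cmi SS Pbar ?X2 ?Ys ?X1 = real n * ce SS Pbar ?Ys ?X1 + real n * (\<Sum>s\<in>SS. Pbar s * log 2 (Wf s))"
    by (simp add: distrib_left)
  then show ?thesis using om c5 c6 c7 by linarith
qed


lemma bound_III:
  "log 2 (real M) \<le> ent Om Pw (\<lambda>\<omega>. f2 (fst \<omega>)) + ce Om Pw fst (\<lambda>\<omega>. fst (snd \<omega>))
     + real n * cmi SS Pbar (\<lambda>(x1, x2, y, u). x1) (\<lambda>(x1, x2, y, u). y) (\<lambda>(x1, x2, y, u). x2)"
proof -
  let ?V2 = "\<lambda>\<omega>. f2 (fst \<omega>)" and ?Y = "\<lambda>\<omega>. fst (snd \<omega>)"
  let ?X1 = "\<lambda>(x1::'a, x2::'b, y::'c, u::nat). x1" and ?X2 = "\<lambda>(x1::'a, x2::'b, y::'c, u::nat). x2"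
    and ?Ys = "\<lambda>(x1::'a, x2::'b, y::'c, u::nat). y"
  have c1: "ent Om Pw fst = ent Om Pw (\<lambda>\<omega>. (fst \<omega>, ?V2 \<omega>))" by (rule ent_cong[OF finOm]) auto
  have c2: "ce Om Pw fst (\<lambda>\<omega>. (?Y \<omega>, ?V2 \<omega>)) \<le> ce Om Pw fst ?Y" by (rule ce_coarse[OF pmf_Om]) auto
  have c3: "ent Om Pw (\<lambda>\<omega>. (?Y \<omega>, fst \<omega>, ?V2 \<omega>)) = ent Om Pw (\<lambda>\<omega>. (fst \<omega>, ?Y \<omega>, ?V2 \<omega>))"
    by (rule ent_cong[OF finOm]) auto
  have c4: "ce Om Pw ?Y (\<lambda>\<omega>. (fst \<omega>, ?V2 \<omega>)) = ce Om Pw ?Y fst" by (rule ce_cong[OF finOm]) auto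
  have c5: "ce Om Pw ?Y ?V2 \<le> (\<Sum>t<n. ce Om Pw (\<lambda>\<omega>. ?Ys (pi t \<omega>)) (\<lambda>\<omega>. ?X2 (pi t \<omega>)))"
    by (rule Yn_sub) (auto simp: pi_def)
  have c6: "(\<Sum>t<n. ce Om Pw (\<lambda>\<omega>. ?Ys (pi t \<omega>)) (\<lambda>\<omega>. ?X2 (pi t \<omega>))) \<le> real n * ce SS Pbar ?Ys ?X2"
    by (rule TS)
  have c7: "ce Om Pw ?Y fst = - (real n * (\<Sum>s\<in>SS. Pbar s * log 2 (Wf s)))" by (rule ceYW)
  have s1: "ent SS Pbar (\<lambda>d. (?X1 d, ?X2 d)) = ent SS Pbar XS" by (rule ent_cong[OF finSS]) (auto simp: XS_def)
  have s2: "ent SS Pbar (\<lambda>d. (?X1 d, ?Ys d, ?X2 d)) = ent SS Pbar (\<lambda>d. (?Ys d, XS d))"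
    by (rule ent_cong[OF finSS]) (auto simp: XS_def)
  have s3: "ce SS Pbar ?Ys XS = - (\<Sum>s\<in>SS. Pbar s * log 2 (Wf s))" by (rule ceS_YX)
  have om: "log 2 (real M) \<le> ent Om Pw ?V2 + ce Om Pw fst ?Y + ce Om Pw ?Y ?V2 - ce Om Pw ?Y fst"
    using c1 c2 c3 c4 eW unfolding ce_def by linarith
  have sId: "cmi SS Pbar ?X1 ?Ys ?X2 = ce SS Pbar ?Ys ?X2 + (\<Sum>s\<in>SS. Pbar s * log 2 (Wf s))"
    using s1 s2 s3 unfolding cmi_def ce_def by linarith
  then have "real n * cmi SS Pbar ?X1 ?Ys ?X2 = real n * ce SS Pbar ?Ys ?X2 + real n * (\<Sum>s\<in>SS. Pbar s * log 2 (Wf s))"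
    by (simp add: distrib_left)
  then show ?thesis using om c5 c6 c7 by linarith
qed

lemma bound_IV:
  "log 2 (real M) \<le> ce Om Pw fst (\<lambda>\<omega>. fst (snd \<omega>))
     + real n * mi SS Pbar (\<lambda>d. ((\<lambda>(x1, x2, y, u). x1) d, (\<lambda>(x1, x2, y, u). x2) d)) (\<lambda>(x1, x2, y, u). y)"
proof -
  let ?Y = "\<lambda>\<omega>. fst (snd \<omega>)"
  let ?X1 = "\<lambda>(x1::'a, x2::'b, y::'c, u::nat). x1" and ?X2 = "\<lambda>(x1::'a, x2::'b, y::'c, u::nat). x2"
    and ?Ys = "\<lambda>(x1::'a, x2::'b, y::'c, u::nat). y"
  have c1: "ent Om Pw (\<lambda>\<omega>. (?Y \<omega>, fst \<omega>)) = ent Om Pw (\<lambda>\<omega>. (fst \<omega>, ?Y \<omega>))" by (rule ent_cong[OF finOm]) auto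
  have c2: "ent Om Pw (\<lambda>\<omega>. (?Y \<omega>, ())) = ent Om Pw ?Y" by (rule ent_cong[OF finOm]) auto
  have c5: "ce Om Pw ?Y (\<lambda>_. ()) \<le> (\<Sum>t<n. ce Om Pw (\<lambda>\<omega>. ?Ys (pi t \<omega>)) (\<lambda>\<omega>. (\<lambda>_. ()) (pi t \<omega>)))"
    by (rule Yn_sub) auto
  have c6: "(\<Sum>t<n. ce Om Pw (\<lambda>\<omega>. ?Ys (pi t \<omega>)) (\<lambda>\<omega>. (\<lambda>_. ()) (pi t \<omega>))) \<le> real n * ce SS Pbar ?Ys (\<lambda>_. ())"
    by (rule TS)
  have c7: "ce Om Pw ?Y fst = - (real n * (\<Sum>s\<in>SS. Pbar s * log 2 (Wf s)))" by (rule ceYW)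
  have s1: "ent SS Pbar (\<lambda>d. ((?X1 d, ?X2 d), ())) = ent SS Pbar XS" by (rule ent_cong[OF finSS]) (auto simp: XS_def)
  have s2: "ent SS Pbar (\<lambda>d. ((?X1 d, ?X2 d), ?Ys d, ())) = ent SS Pbar (\<lambda>d. (?Ys d, XS d))"
    by (rule ent_cong[OF finSS]) (auto simp: XS_def)
  have s3: "ce SS Pbar ?Ys XS = - (\<Sum>s\<in>SS. Pbar s * log 2 (Wf s))" by (rule ceS_YX)
  have om: "log 2 (real M) \<le> ce Om Pw fst ?Y + ce Om Pw ?Y (\<lambda>_. ()) - ce Om Pw ?Y fst"
    using c1 c2 eW ent_unit unfolding ce_def by linarith
  have sId: "mi SS Pbar (\<lambda>d. (?X1 d, ?X2 d)) ?Ys = ce SS Pbar ?Ys (\<lambda>_. ()) + (\<Sum>s\<in>SS. Pbar s * log 2 (Wf s))"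
    using s1 s2 s3 unfolding mi_def cmi_def ce_def by linarith
  then have "real n * mi SS Pbar (\<lambda>d. (?X1 d, ?X2 d)) ?Ys = real n * ce SS Pbar ?Ys (\<lambda>_. ()) + real n * (\<Sum>s\<in>SS. Pbar s * log 2 (Wf s))"
    by (simp add: distrib_left)
  then show ?thesis using om c5 c6 c7 by simp
qed

end

context dcode
begin

lemma bound_V:
  "2 * log 2 (real M) \<le> ent Om Pw (\<lambda>\<omega>. f1 (fst \<omega>)) + ent Om Pw (\<lambda>\<omega>. f2 (fst \<omega>))
     + 2 * ce Om Pw fst (\<lambda>\<omega>. fst (snd \<omega>))
     + real n * (cmi SS Pbar (\<lambda>d. ((\<lambda>(x1, x2, y, u). x1) d, (\<lambda>(x1, x2, y, u). x2) d)) (\<lambda>(x1, x2, y, u). y) (\<lambda>(x1, x2, y, u). u)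
        + cmi SS Pbar (\<lambda>(x1, x2, y, u). x1) (\<lambda>(x1, x2, y, u). u) (\<lambda>(x1, x2, y, u). x2)
        + cmi SS Pbar (\<lambda>(x1, x2, y, u). x2) (\<lambda>(x1, x2, y, u). u) (\<lambda>(x1, x2, y, u). x1))"
proof -
  let ?F = "fst :: nat \<times> (nat \<Rightarrow> 'c) \<times> (nat \<Rightarrow> nat) \<Rightarrow> nat"
  let ?Y = "\<lambda>\<omega>::nat \<times> (nat \<Rightarrow> 'c) \<times> (nat \<Rightarrow> nat). fst (snd \<omega>)"
  let ?U = "\<lambda>\<omega>::nat \<times> (nat \<Rightarrow> 'c) \<times> (nat \<Rightarrow> nat). snd (snd \<omega>)"
  let ?B = "snd :: nat \<times> (nat \<Rightarrow> 'c) \<times> (nat \<Rightarrow> nat) \<Rightarrow> (nat \<Rightarrow> 'c) \<times> (nat \<Rightarrow> nat)"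
  let ?V1 = "\<lambda>\<omega>::nat \<times> (nat \<Rightarrow> 'c) \<times> (nat \<Rightarrow> nat). f1 (fst \<omega>)"
  let ?V2 = "\<lambda>\<omega>::nat \<times> (nat \<Rightarrow> 'c) \<times> (nat \<Rightarrow> nat). f2 (fst \<omega>)"
  let ?V = "\<lambda>\<omega>::nat \<times> (nat \<Rightarrow> 'c) \<times> (nat \<Rightarrow> nat). (f1 (fst \<omega>), f2 (fst \<omega>))"
  let ?X1 = "\<lambda>(x1::'a, x2::'b, y::'c, u::nat). x1" and ?X2 = "\<lambda>(x1::'a, x2::'b, y::'c, u::nat). x2"
    and ?Ys = "\<lambda>(x1::'a, x2::'b, y::'c, u::nat). y" and ?Us = "\<lambda>(x1::'a, x2::'b, y::'c, u::nat). u"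
  let ?e = "ent Om Pw"
  have a1: "0 \<le> cmi Om Pw ?F ?U ?Y" by (rule cmi_nonneg[OF pmf_Om])
  have a2: "?e (\<lambda>\<omega>. (?U \<omega>, ?Y \<omega>)) = ?e ?B" by (rule ent_cong[OF finOm]) auto
  have a3: "?e (\<lambda>\<omega>. (?F \<omega>, ?U \<omega>, ?Y \<omega>)) = ?e (\<lambda>\<omega>. (?F \<omega>, ?B \<omega>))" by (rule ent_cong[OF finOm]) auto
  have a4: "?e (\<lambda>\<omega>. (?Y \<omega>, ?U \<omega>)) = ?e ?B" by (rule ent_cong[OF finOm]) auto
  have a5: "?e (\<lambda>\<omega>. (?F \<omega>, ?Y \<omega>, ?U \<omega>)) = ?e (\<lambda>\<omega>. (?F \<omega>, ?B \<omega>))" by (rule ent_cong[OF finOm]) auto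
  have a6: "?e (\<lambda>\<omega>. (?Y \<omega>, ?F \<omega>, ?U \<omega>)) = ?e (\<lambda>\<omega>. (?B \<omega>, ?F \<omega>))" by (rule ent_cong[OF finOm]) auto
  have a7: "?e (\<lambda>\<omega>. (?F \<omega>, ?U \<omega>)) = ?e (\<lambda>\<omega>. (?U \<omega>, ?F \<omega>))" by (rule ent_cong[OF finOm]) auto
  have a8: "?e (\<lambda>\<omega>. (?F \<omega>, ?Y \<omega>)) = ?e (\<lambda>\<omega>. (?Y \<omega>, ?F \<omega>))" by (rule ent_cong[OF finOm]) auto
  have a13: "?e (\<lambda>\<omega>. (?F \<omega>, ?B \<omega>)) = ?e (\<lambda>\<omega>. (?B \<omega>, ?F \<omega>))" by (rule ent_cong[OF finOm]) auto
  have a9: "ce Om Pw ?Y ?U \<le> (\<Sum>t<n. ce Om Pw (\<lambda>\<omega>. ?Ys (pi t \<omega>)) (\<lambda>\<omega>. ?Us (pi t \<omega>)))"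
    by (rule Yn_sub) (auto simp: pi_def)
  have a10: "(\<Sum>t<n. ce Om Pw (\<lambda>\<omega>. ?Ys (pi t \<omega>)) (\<lambda>\<omega>. ?Us (pi t \<omega>))) \<le> real n * ce SS Pbar ?Ys ?Us"
    by (rule TS)
  have a11: "ce Om Pw ?B ?F = - (real n * (\<Sum>s\<in>SS. Pbar s * log 2 (WQf s)))" by (rule ceBW)
  have a12: "ce Om Pw ?U ?F = - (real n * (\<Sum>s\<in>SS. Pbar s * log 2 (KUf s)))" by (rule ceUW)
  have b1: "?e ?F = ?e (\<lambda>\<omega>. (?F \<omega>, ?V \<omega>))" by (rule ent_cong[OF finOm]) auto
  have b2: "cmi Om Pw ?F ?Y ?V = 0" by (rule markov_Om)
  have b3: "ce Om Pw ?F (\<lambda>\<omega>. (?Y \<omega>, ?V \<omega>)) \<le> ce Om Pw ?F ?Y" by (rule ce_coarse[OF pmf_Om]) auto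
  have b4: "?e (\<lambda>\<omega>. (?V1 \<omega>, ())) = ?e ?V1" by (rule ent_cong[OF finOm]) auto
  have b5: "?e (\<lambda>\<omega>. (?V2 \<omega>, ())) = ?e ?V2" by (rule ent_cong[OF finOm]) auto
  have b6: "?e (\<lambda>\<omega>. (?V1 \<omega>, ?V2 \<omega>, ())) = ?e ?V" by (rule ent_cong[OF finOm]) auto
  have d1: "cmi Om Pw ?F ?U ?V = 0" using markov_Om[of snd] by simp
  have d2: "?e (\<lambda>\<omega>. (?F \<omega>, ?U \<omega>, ?V \<omega>)) = ?e (\<lambda>\<omega>. (?F \<omega>, ?U \<omega>))" by (rule ent_cong[OF finOm]) auto
  have d3: "?e (\<lambda>\<omega>. (?U \<omega>, ?V \<omega>)) = ?e (\<lambda>\<omega>. (?V \<omega>, ?U \<omega>))" by (rule ent_cong[OF finOm]) auto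
  have d4: "?e (\<lambda>\<omega>. (?V2 \<omega>, ?V1 \<omega>)) = ?e ?V" by (rule ent_cong[OF finOm]) auto
  have d5: "?e (\<lambda>\<omega>. (?V2 \<omega>, ?U \<omega>, ?V1 \<omega>)) = ?e (\<lambda>\<omega>. (?V \<omega>, ?U \<omega>))" by (rule ent_cong[OF finOm]) auto
  have d6: "?e (\<lambda>\<omega>. (?U \<omega>, ?V1 \<omega>)) = ?e (\<lambda>\<omega>. (?V1 \<omega>, ?U \<omega>))" by (rule ent_cong[OF finOm]) auto
  have d7: "0 \<le> cmi Om Pw ?V1 ?V2 ?U" by (rule cmi_nonneg[OF pmf_Om])
  have d8: "?e (\<lambda>\<omega>. (?V2 \<omega>, ?U \<omega>)) = ?e (\<lambda>\<omega>. (?U \<omega>, ?V2 \<omega>))" by (rule ent_cong[OF finOm]) auto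
  have d9: "?e (\<lambda>\<omega>. (?V1 \<omega>, ?V2 \<omega>, ?U \<omega>)) = ?e (\<lambda>\<omega>. (?V1 \<omega>, ?U \<omega>, ?V2 \<omega>))" by (rule ent_cong[OF finOm]) auto
  have d10: "?e (\<lambda>\<omega>. (?V1 \<omega>, ?U \<omega>, ?V2 \<omega>)) = ?e (\<lambda>\<omega>. (?U \<omega>, ?V \<omega>))" by (rule ent_cong[OF finOm]) auto
  have d11: "ce Om Pw ?U (\<lambda>\<omega>. (?F \<omega>, ?V \<omega>)) \<le> ce Om Pw ?U ?V" by (rule ce_cond[OF pmf_Om])
  have d12: "ce Om Pw ?U (\<lambda>\<omega>. (?F \<omega>, ?V \<omega>)) = ce Om Pw ?U ?F" by (rule ce_cong[OF finOm]) auto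
  have d13: "ce Om Pw ?U ?V2 \<le> (\<Sum>t<n. ce Om Pw (\<lambda>\<omega>. ?Us (pi t \<omega>)) (\<lambda>\<omega>. ?X2 (pi t \<omega>)))"
    by (rule Un_sub) (auto simp: pi_def)
  have d14: "(\<Sum>t<n. ce Om Pw (\<lambda>\<omega>. ?Us (pi t \<omega>)) (\<lambda>\<omega>. ?X2 (pi t \<omega>))) \<le> real n * ce SS Pbar ?Us ?X2"
    by (rule TS)
  have d15: "ce Om Pw ?U ?V1 \<le> (\<Sum>t<n. ce Om Pw (\<lambda>\<omega>. ?Us (pi t \<omega>)) (\<lambda>\<omega>. ?X1 (pi t \<omega>)))"
    by (rule Un_sub) (auto simp: pi_def)
  have d16: "(\<Sum>t<n. ce Om Pw (\<lambda>\<omega>. ?Us (pi t \<omega>)) (\<lambda>\<omega>. ?X1 (pi t \<omega>))) \<le> real n * ce SS Pbar ?Us ?X1"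
    by (rule TS)
  have d17: "?e (\<lambda>\<omega>. (?U \<omega>, ?V2 \<omega>, ?V1 \<omega>)) = ?e (\<lambda>\<omega>. (?U \<omega>, ?V \<omega>))" by (rule ent_cong[OF finOm]) auto
  have d18: "?e (\<lambda>\<omega>. (?V2 \<omega>, ?U \<omega>, ?V1 \<omega>)) = ?e (\<lambda>\<omega>. (?U \<omega>, ?V \<omega>))" by (rule ent_cong[OF finOm]) auto
  have h1: "?e ?F \<le> ce Om Pw ?F ?Y + ?e ?V" using b1 b2 b3 unfolding cmi_def ce_def by linarith
  have h2: "?e ?F \<le> ce Om Pw ?F ?Y + (?e ?F + ?e ?U - ?e (\<lambda>\<omega>. (?F \<omega>, ?U \<omega>))) + cmi Om Pw ?F ?Y ?U"
    using a1 a2 a3 a4 a5 unfolding cmi_def ce_def by linarith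
  have h3: "cmi Om Pw ?F ?Y ?U = ce Om Pw ?Y ?U - ce Om Pw ?B ?F + ce Om Pw ?U ?F"
    using a5 a7 a13 unfolding cmi_def ce_def by linarith
  have h4: "?e ?F + ?e ?U - ?e (\<lambda>\<omega>. (?F \<omega>, ?U \<omega>)) = ?e ?V + ?e ?U - ?e (\<lambda>\<omega>. (?U \<omega>, ?V \<omega>))"
    using d1 b1 d2 unfolding cmi_def by linarith
  have h5: "?e ?U + ?e (\<lambda>\<omega>. (?U \<omega>, ?V \<omega>)) \<le> ?e (\<lambda>\<omega>. (?U \<omega>, ?V1 \<omega>)) + ?e (\<lambda>\<omega>. (?U \<omega>, ?V2 \<omega>))"
    using d7 d6 d8 d9 d10 unfolding cmi_def by linarith
  have h6: "ce Om Pw ?U ?F \<le> ce Om Pw ?U ?V" using d11 d12 by linarith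
  have om: "2 * log 2 (real M) \<le> ?e ?V1 + ?e ?V2 + 2 * ce Om Pw ?F ?Y
      + ce Om Pw ?Y ?U - ce Om Pw ?B ?F + ce Om Pw ?U ?F
      + ce Om Pw ?U ?V2 - ce Om Pw ?U ?F + ce Om Pw ?U ?V1 - ce Om Pw ?U ?F"
  proof -
    have e6: "ce Om Pw ?U ?V = ?e (\<lambda>\<omega>. (?U \<omega>, ?V \<omega>)) - ?e ?V" unfolding ce_def ..
    have e7: "ce Om Pw ?U ?V1 = ?e (\<lambda>\<omega>. (?U \<omega>, ?V1 \<omega>)) - ?e ?V1" unfolding ce_def ..
    have e8: "ce Om Pw ?U ?V2 = ?e (\<lambda>\<omega>. (?U \<omega>, ?V2 \<omega>)) - ?e ?V2" unfolding ce_def ..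
    show ?thesis using h1 h2 h3 h4 h5 h6 e6 e7 e8 eW by linarith
  qed
  have s1: "ent SS Pbar (\<lambda>d. ((?X1 d, ?X2 d), ?Us d)) = ent SS Pbar (\<lambda>d. (?Us d, XS d))"
    by (rule ent_cong[OF finSS]) (auto simp: XS_def)
  have s2: "ent SS Pbar (\<lambda>d. ((?X1 d, ?X2 d), ?Ys d, ?Us d)) = ent SS Pbar (\<lambda>d. ((\<lambda>(x1, x2, y, u). (y, u)) d, XS d))"
    by (rule ent_cong[OF finSS]) (auto simp: XS_def)
  have s3: "ent SS Pbar (\<lambda>d. (?X1 d, ?X2 d)) = ent SS Pbar XS" by (rule ent_cong[OF finSS]) (auto simp: XS_def)
  have s4: "ent SS Pbar (\<lambda>d. (?X1 d, ?Us d, ?X2 d)) = ent SS Pbar (\<lambda>d. (?Us d, XS d))"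
    by (rule ent_cong[OF finSS]) (auto simp: XS_def)
  have s5: "ent SS Pbar (\<lambda>d. (?X2 d, ?X1 d)) = ent SS Pbar XS" by (rule ent_cong[OF finSS]) (auto simp: XS_def)
  have s6: "ent SS Pbar (\<lambda>d. (?X2 d, ?Us d, ?X1 d)) = ent SS Pbar (\<lambda>d. (?Us d, XS d))"
    by (rule ent_cong[OF finSS]) (auto simp: XS_def)
  have s7: "ce SS Pbar (\<lambda>(x1, x2, y, u). (y, u)) XS = - (\<Sum>s\<in>SS. Pbar s * log 2 (WQf s))" by (rule ceS_BX)
  have s8: "ce SS Pbar ?Us XS = - (\<Sum>s\<in>SS. Pbar s * log 2 (KUf s))" by (rule ceS_UX)
  have sId: "cmi SS Pbar (\<lambda>d. (?X1 d, ?X2 d)) ?Ys ?Us + cmi SS Pbar ?X1 ?Us ?X2 + cmi SS Pbar ?X2 ?Us ?X1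
     = ce SS Pbar ?Ys ?Us + ce SS Pbar ?Us ?X2 + ce SS Pbar ?Us ?X1
       + (\<Sum>s\<in>SS. Pbar s * log 2 (WQf s)) + (\<Sum>s\<in>SS. Pbar s * log 2 (KUf s))"
    using s1 s2 s3 s4 s5 s6 s7 s8 unfolding cmi_def ce_def by linarith
  then have "real n * (cmi SS Pbar (\<lambda>d. (?X1 d, ?X2 d)) ?Ys ?Us + cmi SS Pbar ?X1 ?Us ?X2 + cmi SS Pbar ?X2 ?Us ?X1)
     = real n * ce SS Pbar ?Ys ?Us + real n * ce SS Pbar ?Us ?X2 + real n * ce SS Pbar ?Us ?X1
       + real n * (\<Sum>s\<in>SS. Pbar s * log 2 (WQf s)) + real n * (\<Sum>s\<in>SS. Pbar s * log 2 (KUf s))"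
    by (simp add: distrib_left)
  then show ?thesis using om a9 a10 a11 a12 d13 d14 d15 d16 by linarith
qed

end

context dcode
begin

lemma Pe_err: "(\<Sum>\<omega>\<in>Om. Pw \<omega> * (if dec (fst (snd \<omega>)) \<noteq> fst \<omega> then 1 else 0)) = err_prob W n M f1 f2 g1 g2 dec"
proof -
  have "(\<Sum>\<omega>\<in>Om. Pw \<omega> * (if dec (fst (snd \<omega>)) \<noteq> fst \<omega> then 1 else 0))
     = (\<Sum>w<M. \<Sum>y\<in>YS. (if dec y \<noteq> w then 1 else 0) * (\<Sum>u\<in>US. Pw (w, y, u)))"
    unfolding sum_Om by (simp add: sum_distrib_left mult.commute)
  also have "\<dots> = (\<Sum>w<M. \<Sum>y\<in>YS. (if dec y \<noteq> w then 1 else 0) * (1 / real M * (\<Prod>t<n. W (g1 (f1 w) t) (g2 (f2 w) t) (y t))))"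
    by (simp add: sum_Pw_u)
  also have "\<dots> = err_prob W n M f1 f2 g1 g2 dec"
    unfolding err_prob_def YS_def by (simp add: sum_distrib_left mult.commute mult.left_commute)
  finally show ?thesis .
qed

lemma bt_eq: "bound_term W C1 C2 pbar k q =
  min (C1 + C2)
    (min (C1 + cmi SS Pbar (\<lambda>(x1, x2, y, u). x2) (\<lambda>(x1, x2, y, u). y) (\<lambda>(x1, x2, y, u). x1))
    (min (C2 + cmi SS Pbar (\<lambda>(x1, x2, y, u). x1) (\<lambda>(x1, x2, y, u). y) (\<lambda>(x1, x2, y, u). x2))
    (min (mi SS Pbar (\<lambda>d. ((\<lambda>(x1, x2, y, u). x1) d, (\<lambda>(x1, x2, y, u). x2) d)) (\<lambda>(x1, x2, y, u). y))
         ((C1 + C2 + cmi SS Pbar (\<lambda>d. ((\<lambda>(x1, x2, y, u). x1) d, (\<lambda>(x1, x2, y, u). x2) d)) (\<lambda>(x1, x2, y, u). y) (\<lambda>(x1, x2, y, u). u)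
            + cmi SS Pbar (\<lambda>(x1, x2, y, u). x1) (\<lambda>(x1, x2, y, u). u) (\<lambda>(x1, x2, y, u). x2)
            + cmi SS Pbar (\<lambda>(x1, x2, y, u). x2) (\<lambda>(x1, x2, y, u). u) (\<lambda>(x1, x2, y, u). x1)) / 2))))"
  unfolding bound_term_def Let_def SS_def Pbar_def by simp

lemma main_bound:
  fixes a C1 C2 :: real
  assumes a: "0 < a" "a < 1" and err: "err_prob W n M f1 f2 g1 g2 dec \<le> a"
    and h1: "ent {..<M} (\<lambda>_. 1 / real M) f1 \<le> real n * C1"
    and h2: "ent {..<M} (\<lambda>_. 1 / real M) f2 \<le> real n * C2"
  shows "(1 - a) * log 2 (real M) \<le> real n * bound_term W C1 C2 pbar k q + (- log 2 (1 - a) - a * log 2 a)"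
proof -
  let ?L = "log 2 (real M)" and ?G = "- log 2 (1 - a) - a * log 2 a"
  let ?FA = "ce Om Pw fst (\<lambda>\<omega>. fst (snd \<omega>))"
  have fano0: "?FA \<le> - log 2 (1 - a) + (\<Sum>\<omega>\<in>Om. Pw \<omega> * (if dec (fst (snd \<omega>)) \<noteq> fst \<omega> then 1 else 0)) * (log 2 (real M) - log 2 a)"
    by (rule fano[OF pmf_Om _ a]) (use Om_fst in auto)
  have LM: "0 \<le> ?L" using Mpos by simp
  have la: "log 2 a < 0" using a by simp
  have pe0: "0 \<le> err_prob W n M f1 f2 g1 g2 dec"
    using Pe_err[symmetric, of dec] Pw_nn by (simp add: sum_nonneg)
  have "err_prob W n M f1 f2 g1 g2 dec * (?L - log 2 a) \<le> a * (?L - log 2 a)"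
    using err LM la by (intro mult_right_mono) auto
  then have FA: "?FA \<le> ?G + a * ?L" using fano0 unfolding Pe_err by (simp add: algebra_simps)
  have e1: "ent Om Pw (\<lambda>\<omega>. f1 (fst \<omega>)) \<le> real n * C1" using h1 eV1 by simp
  have e2: "ent Om Pw (\<lambda>\<omega>. f2 (fst \<omega>)) \<le> real n * C2" using h2 eV2 by simp
  have B1: "(1 - a) * ?L \<le> real n * (C1 + C2) + ?G"
    using bound_I e1 e2 FA by (simp add: algebra_simps)
  have B2: "(1 - a) * ?L \<le> real n * (C1 + cmi SS Pbar (\<lambda>(x1, x2, y, u). x2) (\<lambda>(x1, x2, y, u). y) (\<lambda>(x1, x2, y, u). x1)) + ?G"
    using bound_II e1 FA by (simp add: algebra_simps)
  have B3: "(1 - a) * ?L \<le> real n * (C2 + cmi SS Pbar (\<lambda>(x1, x2, y, u). x1) (\<lambda>(x1, x2, y, u). y) (\<lambda>(x1, x2, y, u). x2)) + ?G"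
    using bound_III e2 FA by (simp add: algebra_simps)
  have B4: "(1 - a) * ?L \<le> real n * mi SS Pbar (\<lambda>d. ((\<lambda>(x1, x2, y, u). x1) d, (\<lambda>(x1, x2, y, u). x2) d)) (\<lambda>(x1, x2, y, u). y) + ?G"
    using bound_IV FA by (simp add: algebra_simps)
  have B5: "(1 - a) * ?L \<le> real n * ((C1 + C2 + cmi SS Pbar (\<lambda>d. ((\<lambda>(x1, x2, y, u). x1) d, (\<lambda>(x1, x2, y, u). x2) d)) (\<lambda>(x1, x2, y, u). y) (\<lambda>(x1, x2, y, u). u)
            + cmi SS Pbar (\<lambda>(x1, x2, y, u). x1) (\<lambda>(x1, x2, y, u). u) (\<lambda>(x1, x2, y, u). x2)
            + cmi SS Pbar (\<lambda>(x1, x2, y, u). x2) (\<lambda>(x1, x2, y, u). u) (\<lambda>(x1, x2, y, u). x1)) / 2) + ?G"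
    using bound_V e1 e2 FA by (simp add: algebra_simps)
  show ?thesis unfolding bt_eq
    using B1 B2 B3 B4 B5 npos by (simp add: min_def)
qed

end

lemma G_lim: "((\<lambda>a::real. - log 2 (1 - a) - a * log 2 a) \<longlongrightarrow> 0) (at_right 0)"
  unfolding log_def by real_asymp

definition p0 :: "nat \<Rightarrow> nat \<Rightarrow> (nat \<Rightarrow> nat) \<Rightarrow> (nat \<Rightarrow> nat) \<Rightarrow> (nat \<Rightarrow> nat \<Rightarrow> 'a) \<Rightarrow> (nat \<Rightarrow> nat \<Rightarrow> 'b) \<Rightarrow> 'a \<Rightarrow> 'b \<Rightarrow> real" where
  "p0 M n f1 f2 g1 g2 = (\<lambda>x1 x2. (\<Sum>t<n. \<Sum>w<M. if g1 (f1 w) t = x1 \<and> g2 (f2 w) t = x2 then 1 / real M else 0) / real n)"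

context dcode
begin
lemma pbar_explicit: "pbar = p0 M n f1 f2 g1 g2"
  unfolding p0_def by (auto simp: fun_eq_iff pbar_def ptw_def)
end

lemma pmf_gen:
  assumes "is_channel W" "p \<in> input_pmfs" "(k, q) \<in> aux_channels"
  shows "pmf_on ((UNIV::'a::finite set) \<times> (UNIV::'b::finite set) \<times> (UNIV::'c::finite set) \<times> {..<k})
     (\<lambda>(x1, x2, y, u). p x1 x2 * W x1 x2 y * q y u)"
proof -
  have Wnn: "\<And>a b c. 0 \<le> W a b c" and Ws: "\<And>a b. (\<Sum>c\<in>UNIV. W a b c) = 1"
    using assms(1) unfolding is_channel_def by auto
  have pnn: "\<And>a b. 0 \<le> p a b" and ps: "(\<Sum>a\<in>UNIV. \<Sum>b\<in>UNIV. p a b) = 1"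
    using assms(2) unfolding input_pmfs_def by auto
  have qnn: "\<And>y u. 0 \<le> q y u" and qs: "\<And>y. (\<Sum>u<k. q y u) = 1"
    using assms(3) unfolding aux_channels_def by auto
  let ?S = "(UNIV::'a set) \<times> (UNIV::'b set) \<times> (UNIV::'c set) \<times> {..<k}"
  have "sum (\<lambda>(x1, x2, y, u). p x1 x2 * W x1 x2 y * q y u) ?S
      = (\<Sum>a\<in>UNIV. \<Sum>b\<in>UNIV. p a b * (\<Sum>c\<in>UNIV. W a b c * (\<Sum>e<k. q c e)))"
    by (simp add: sum.cartesian_product[symmetric] sum_distrib_left mult.assoc)
  also have "\<dots> = 1" using qs Ws ps by simp
  finally show ?thesis unfolding pmf_on_def using Wnn pnn qnn by (auto intro!: mult_nonneg_nonneg)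
qed

lemma bt_nonneg:
  assumes "is_channel W" "p \<in> input_pmfs" "(k, q) \<in> aux_channels" "0 \<le> C1" "0 \<le> C2"
  shows "0 \<le> bound_term W C1 C2 p k q"
proof -
  note pm = pmf_gen[OF assms(1-3)]
  show ?thesis unfolding bound_term_def Let_def mi_def
    using assms(4,5) by (simp add: cmi_nonneg[OF pm] add_nonneg_nonneg)
qed

lemma bt_le: "bound_term W C1 C2 p k q \<le> C1 + C2"
  unfolding bound_term_def Let_def by simp

lemma aux_ne: "(1, \<lambda>_ _. 1) \<in> aux_channels"
  unfolding aux_channels_def by simp

lemma INF_facts:
  assumes "is_channel W" "p \<in> input_pmfs" "0 \<le> C1" "0 \<le> C2"
  shows "bdd_below ((\<lambda>kq. bound_term W C1 C2 p (fst kq) (snd kq)) ` aux_channels)"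
    and "(INF kq\<in>aux_channels. bound_term W C1 C2 p (fst kq) (snd kq)) \<le> C1 + C2"
proof -
  show bb: "bdd_below ((\<lambda>kq. bound_term W C1 C2 p (fst kq) (snd kq)) ` aux_channels)"
    by (rule bdd_belowI[where m=0]) (use bt_nonneg[OF assms(1,2) _ assms(3,4)] in auto)
  have "(INF kq\<in>aux_channels. bound_term W C1 C2 p (fst kq) (snd kq)) \<le> bound_term W C1 C2 p 1 (\<lambda>_ _. 1)"
    using cINF_lower[OF bb aux_ne] by simp
  then show "(INF kq\<in>aux_channels. bound_term W C1 C2 p (fst kq) (snd kq)) \<le> C1 + C2"
    using bt_le[of W C1 C2 p 1 "\<lambda>_ _. 1"] by linarith
qed

lemma p0_input:
  fixes W :: "'a::finite \<Rightarrow> 'b::finite \<Rightarrow> 'c::finite \<Rightarrow> real"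
    and g1 :: "nat \<Rightarrow> nat \<Rightarrow> 'a" and g2 :: "nat \<Rightarrow> nat \<Rightarrow> 'b"
  assumes "is_channel W" "M > 0" "n > 0"
  shows "p0 M n f1 f2 g1 g2 \<in> input_pmfs"
proof -
  interpret dcode W M n 1 f1 f2 g1 g2 "\<lambda>_ _. 1"
    by unfold_locales (use assms in auto)
  show ?thesis using pbar_input pbar_explicit by simp
qed

lemma key:
  fixes W :: "'a::finite \<Rightarrow> 'b::finite \<Rightarrow> 'c::finite \<Rightarrow> real"
  assumes chan: "is_channel W" and C: "0 \<le> C1" "0 \<le> C2"
    and ach: "achievable W C1 C2 R" and a: "0 < a" "a < 1"
  shows "(1 - a) * R - (- log 2 (1 - a) - a * log 2 a) \<le> diamond_bound W C1 C2"
proof -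
  let ?G = "- log 2 (1 - a) - a * log 2 a"
  obtain n f1 f2 and g1 :: "nat \<Rightarrow> nat \<Rightarrow> 'a" and g2 :: "nat \<Rightarrow> nat \<Rightarrow> 'b" and dec :: "(nat \<Rightarrow> 'c) \<Rightarrow> nat"
    where n: "n > 0"
      and h1: "ent {..<num_msgs n R} (\<lambda>_. 1 / real (num_msgs n R)) f1 \<le> real n * C1"
      and h2: "ent {..<num_msgs n R} (\<lambda>_. 1 / real (num_msgs n R)) f2 \<le> real n * C2"
      and err: "err_prob W n (num_msgs n R) f1 f2 g1 g2 dec \<le> a"
    using ach a unfolding achievable_def by blast
  define M where "M = num_msgs n R"
  have pow: "2 powr (real n * R) > 0" by simp
  have Mge: "real M \<ge> 2 powr (real n * R)" unfolding M_def num_msgs_def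
    using pow by (simp add: of_nat_nat)
  then have Mpos: "M > 0" using pow by linarith
  have nR: "real n * R \<le> log 2 (real M)"
  proof -
    have "log 2 (2 powr (real n * R)) \<le> log 2 (real M)" using log_mono[of 2, OF _ pow Mge] by simp
    then show ?thesis by simp
  qed
  have G0: "0 \<le> ?G"
  proof -
    have "log 2 (1 - a) \<le> 0" using a by simp
    moreover have "log 2 a \<le> 0" using a by simp
    then have "a * log 2 a \<le> 0" using a by (simp add: mult_nonneg_nonpos)
    ultimately show ?thesis by linarith
  qed
  have bt: "(1 - a) * R - ?G \<le> bound_term W C1 C2 (p0 M n f1 f2 g1 g2) k q" if kq: "(k, q) \<in> aux_channels" for k q
  proof -
    interpret dcode W M n k f1 f2 g1 g2 q
      by unfold_locales (use chan Mpos n kq in \<open>auto simp: aux_channels_def\<close>)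
    have mb: "(1 - a) * log 2 (real M) \<le> real n * bound_term W C1 C2 pbar k q + ?G"
      by (rule main_bound[OF a]) (use err h1 h2 in \<open>simp_all add: M_def\<close>)
    have "real n * ((1 - a) * R) \<le> (1 - a) * log 2 (real M)"
      using nR a by (simp add: mult.left_commute mult_left_mono)
    also have "\<dots> \<le> real n * bound_term W C1 C2 pbar k q + ?G" by (rule mb)
    also have "\<dots> \<le> real n * bound_term W C1 C2 pbar k q + real n * ?G"
      using G0 n by (simp add: mult_le_cancel_right1)
    finally have "real n * ((1 - a) * R) \<le> real n * (bound_term W C1 C2 pbar k q + ?G)"
      by (simp add: distrib_left)
    then have "(1 - a) * R \<le> bound_term W C1 C2 pbar k q + ?G" using n by simp
    then show ?thesis unfolding pbar_explicit by simp
  qed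
  have "(1 - a) * R - ?G \<le> (INF kq\<in>aux_channels. bound_term W C1 C2 (p0 M n f1 f2 g1 g2) (fst kq) (snd kq))"
    by (rule cINF_greatest) (use aux_ne bt in auto)
  also have "\<dots> \<le> diamond_bound W C1 C2"
    unfolding diamond_bound_def
  proof (rule cSUP_upper)
    show "p0 M n f1 f2 g1 g2 \<in> input_pmfs" by (rule p0_input[OF chan Mpos n])
    show "bdd_above ((\<lambda>p. INF kq\<in>aux_channels. bound_term W C1 C2 p (fst kq) (snd kq)) ` input_pmfs)"
      by (rule bdd_aboveI[where M="C1 + C2"]) (use INF_facts(2)[OF chan _ C] in auto)
  qed
  finally show ?thesis .
qed


lemma aR_lim: "((\<lambda>a::real. a * R) \<longlongrightarrow> 0) (at_right 0)"
proof -
  have "((\<lambda>a::real. a) \<longlongrightarrow> 0) (at_right 0)" by (rule tendsto_ident_at)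
  then have "((\<lambda>a::real. a * R) \<longlongrightarrow> 0 * R) (at_right 0)" by (rule tendsto_mult_right)
  then show ?thesis by simp
qed

lemma ach0:
  fixes W :: "'a::finite \<Rightarrow> 'b::finite \<Rightarrow> 'c::finite \<Rightarrow> real"
  assumes "0 \<le> C1" "0 \<le> C2"
  shows "achievable W C1 C2 0"
  unfolding achievable_def
proof (intro allI impI)
  fix \<epsilon> :: real assume e: "\<epsilon> > 0"
  have M1: "num_msgs 1 0 = 1" unfolding num_msgs_def by simp
  have E: "ent {..<1::nat} (\<lambda>_. 1 / real (1::nat)) (\<lambda>_. 0::nat) = 0"
    by (rule ent_const) auto
  have Er: "err_prob W 1 1 (\<lambda>_. 0) (\<lambda>_. 0) (\<lambda>_ _. undefined :: 'a) (\<lambda>_ _. undefined :: 'b) (\<lambda>_. 0) = 0"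
    unfolding err_prob_def by simp
  show "\<exists>n>0. \<exists>f1 f2 (g1::nat \<Rightarrow> nat \<Rightarrow> 'a) (g2::nat \<Rightarrow> nat \<Rightarrow> 'b) dec::(nat \<Rightarrow> 'c) \<Rightarrow> nat.
          ent {..<num_msgs n 0} (\<lambda>_. 1 / real (num_msgs n 0)) f1 \<le> real n * C1 \<and>
          ent {..<num_msgs n 0} (\<lambda>_. 1 / real (num_msgs n 0)) f2 \<le> real n * C2 \<and>
          err_prob W n (num_msgs n 0) f1 f2 g1 g2 dec \<le> \<epsilon>"
    by (rule exI[of _ 1], rule conjI, simp,
        rule exI[of _ "\<lambda>_. 0"], rule exI[of _ "\<lambda>_. 0"], rule exI[of _ "\<lambda>_ _. undefined"],
        rule exI[of _ "\<lambda>_ _. undefined"], rule exI[of _ "\<lambda>_. 0"])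
       (use M1 E Er assms e in simp)
qed

theorem theorem2:
  fixes W :: "'a::finite \<Rightarrow> 'b::finite \<Rightarrow> 'c::finite \<Rightarrow> real"
    and C1 C2 :: real
  assumes "is_channel W" and "0 \<le> C1" and "0 \<le> C2"
  shows "diamond_capacity W C1 C2 \<le> diamond_bound W C1 C2"
proof -
  let ?DB = "diamond_bound W C1 C2"
  have achR: "R \<le> ?DB" if ach: "achievable W C1 C2 R" for R
  proof (rule ccontr)
    assume "\<not> R \<le> ?DB"
    then have d: "R - ?DB > 0" by simp
    have lim: "((\<lambda>a. a * R + (- log 2 (1 - a) - a * log 2 a)) \<longlongrightarrow> 0) (at_right 0)"
      using tendsto_add[OF aR_lim G_lim] by simp
    have ev1: "eventually (\<lambda>a. a * R + (- log 2 (1 - a) - a * log 2 a) < R - ?DB) (at_right 0)"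
      using order_tendstoD(2)[OF lim d] .
    have ev2: "eventually (\<lambda>a::real. 0 < a) (at_right 0)" by (rule eventually_at_right_less)
    have "((\<lambda>a::real. a) \<longlongrightarrow> 0) (at_right 0)" by (rule tendsto_ident_at)
    then have ev3: "eventually (\<lambda>a::real. a < 1) (at_right 0)" by (rule order_tendstoD(2)) simp
    have "eventually (\<lambda>a. a * R + (- log 2 (1 - a) - a * log 2 a) < R - ?DB \<and> 0 < a \<and> a < 1) (at_right 0)"
      using ev1 ev2 ev3 by eventually_elim auto
    then obtain a where a: "a * R + (- log 2 (1 - a) - a * log 2 a) < R - ?DB" "0 < a" "a < 1"
      using eventually_happens'[OF trivial_limit_at_right_real] by blast
    have "(1 - a) * R - (- log 2 (1 - a) - a * log 2 a) \<le> ?DB"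
      by (rule key[OF assms ach a(2,3)])
    then show False using a(1) by (simp add: algebra_simps)
  qed
  show ?thesis unfolding diamond_capacity_def
    by (rule cSup_least) (use ach0[OF assms(2,3), of W] achR in auto)
qed

end
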